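(* Let $m$ be an element of the monoid $M$. Then $m$ is the skeleton of some finite $(3+1)$-free poset if and only if (i) every representative $w\in\Sigma^*$ of $m$ starts with the letter $c_1$ or $t_{12}$, and (ii) no representative $w\in\Sigma^*$ of $m$ contains a factor (consecutive pair of letters) of the form $c_ic_i$ for some $i\ge1$.
   Context: A poset $P$ is $(3+1)$-free if there are no $a,b,c,d\in P$ with $a<b<c$ and $d$ incomparable to each of $a,b,c$. For $a\in P$ let $D_a=\{x\in P:x<a\}$, $U_a=\{x\in P:x>a\}$. Write $a\mathrel{\top}b$ if neither of $D_a,D_b$ contains the other, $a\mathrel{\bot}b$ if neither of $U_a,U_b$ contains the other, and $a\approx b$ if $D_a=D_b$ and $U_a=U_b$. A top of a tangle is a subset $A\subseteq P$ with $|A|\ge2$ that is a connected component of the graph on $P$ with edges $\{a,b\}$ for $a\mathrel{\top}b$; a bottom of a tangle is defined likewise using $\bot$. A top $A$ and bottom $B$ are matched if there are distinct $a_1,a_2\in A$, $b_1,b_2\in B$ with $b_1<a_1$, $b_2<a_2$ and the pairs $\{a_1,a_2\},\{b_1,b_2\},\{b_1,a_2\},\{b_2,a_1\}$ incomparable; in a $(3+1)$-free poset this is a perfect matching. A tangle is a matched pair $(A,B)$, identified with $A\cup B$; a clone set is an equivalence class of $\approx$ on the vertices in no tangle; clone sets and tangles are the parts of $P$. Levels: $L_1$ = minimal elements of $P$, $L_{k+1}$ = minimal elements of $P\setminus(L_1\cup\dots\cup L_k)$, $\ell(a)=k$ if $a\in L_k$; each clone set lies in one level, each tangle in $L_i\cup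 L_{i+1}$ for some $i$. A compatible listing is an ordering $(X_1,\dots,X_m)$ of all parts such that for $a\in X_i$, $b\in X_j$, $i\ne j$: $a<b$ iff $\ell(a)\le\ell(b)-2$, or $\ell(a)=\ell(b)-1$ and $i<j$ (compatible listings exist). Let $\Sigma=\{c_1,c_2,\dots\}\cup\{t_{12},t_{23},\dots,t_{i\,i+1},\dots\}$, $\Sigma^*$ the free monoid on $\Sigma$, and $M$ the quotient of $\Sigma^*$ by the commutation relations $c_ic_j=c_jc_i$ if $|i-j|\ge2$; $c_it_{j\,j+1}=t_{j\,j+1}c_i$ if $i\le j-2$ or $i\ge j+3$; $t_{i\,i+1}t_{j\,j+1}=t_{j\,j+1}t_{i\,i+1}$ if $|i-j|\ge3$. A representative of $m\in M$ is a word in $\Sigma^*$ mapping to $m$. The word of a compatible listing replaces each clone set at level $i$ by $c_i$ and each tangle in levels $\{i,i+1\}$ by $t_{i\,i+1}$; all compatible listings of $P$ give words with the same image in $M$, the skeleton of $P$. *)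

theory Defs
  imports Main
begin

definition finite_poset :: "nat set \<Rightarrow> (nat \<Rightarrow> nat \<Rightarrow> bool) \<Rightarrow> bool" where
  "finite_poset P lt \<longleftrightarrow> finite P \<and> (\<forall>a\<in>P. \<not> lt a a)
     \<and> (\<forall>a\<in>P. \<forall>b\<in>P. \<forall>c\<in>P. lt a b \<and> lt b c \<longrightarrow> lt a c)"

definition incomp :: "(nat \<Rightarrow> nat \<Rightarrow> bool) \<Rightarrow> nat \<Rightarrow> nat \<Rightarrow> bool" where
  "incomp lt a b \<longleftrightarrow> a \<noteq> b \<and> \<not> lt a b \<and> \<not> lt b a"

definition free31 :: "nat set \<Rightarrow> (nat \<Rightarrow> nat \<Rightarrow> bool) \<Rightarrow> bool" where
  "free31 P lt \<longleftrightarrow> \<not> (\<exists>a\<in>P. \<exists>b\<in>P. \<exists>c\<in>P. \<exists>d\<in>P. lt a b \<and> lt b c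
       \<and> incomp lt d a \<and> incomp lt d b \<and> incomp lt d c)"

definition down_set :: "nat set \<Rightarrow> (nat \<Rightarrow> nat \<Rightarrow> bool) \<Rightarrow> nat \<Rightarrow> nat set" where
  "down_set P lt a = {x\<in>P. lt x a}"

definition up_set :: "nat set \<Rightarrow> (nat \<Rightarrow> nat \<Rightarrow> bool) \<Rightarrow> nat \<Rightarrow> nat set" where
  "up_set P lt a = {x\<in>P. lt a x}"

definition top_rel :: "nat set \<Rightarrow> (nat \<Rightarrow> nat \<Rightarrow> bool) \<Rightarrow> nat \<Rightarrow> nat \<Rightarrow> bool" where
  "top_rel P lt a b \<longleftrightarrow> \<not> down_set P lt a \<subseteq> down_set P lt b \<and> \<not> down_set P lt b \<subseteq> down_set P lt a"

definition bot_rel :: "nat set \<Rightarrow> (nat \<Rightarrow> nat \<Rightarrow> bool) \<Rightarrow> nat \<Rightarrow> nat \<Rightarrow> bool" where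
  "bot_rel P lt a b \<longleftrightarrow> \<not> up_set P lt a \<subseteq> up_set P lt b \<and> \<not> up_set P lt b \<subseteq> up_set P lt a"

definition clone_rel :: "nat set \<Rightarrow> (nat \<Rightarrow> nat \<Rightarrow> bool) \<Rightarrow> nat \<Rightarrow> nat \<Rightarrow> bool" where
  "clone_rel P lt a b \<longleftrightarrow> down_set P lt a = down_set P lt b \<and> up_set P lt a = up_set P lt b"

definition component :: "nat set \<Rightarrow> (nat \<Rightarrow> nat \<Rightarrow> bool) \<Rightarrow> nat \<Rightarrow> nat set" where
  "component P E a = {b\<in>P. (\<lambda>x y. x \<in> P \<and> y \<in> P \<and> E x y)\<^sup>*\<^sup>* a b}"

definition is_top :: "nat set \<Rightarrow> (nat \<Rightarrow> nat \<Rightarrow> bool) \<Rightarrow> nat set \<Rightarrow> bool" where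
  "is_top P lt A \<longleftrightarrow> card A \<ge> 2 \<and> (\<exists>a\<in>P. A = component P (top_rel P lt) a)"

definition is_bottom :: "nat set \<Rightarrow> (nat \<Rightarrow> nat \<Rightarrow> bool) \<Rightarrow> nat set \<Rightarrow> bool" where
  "is_bottom P lt B \<longleftrightarrow> card B \<ge> 2 \<and> (\<exists>b\<in>P. B = component P (bot_rel P lt) b)"

definition matched :: "(nat \<Rightarrow> nat \<Rightarrow> bool) \<Rightarrow> nat set \<Rightarrow> nat set \<Rightarrow> bool" where
  "matched lt A B \<longleftrightarrow> (\<exists>a1\<in>A. \<exists>a2\<in>A. \<exists>b1\<in>B. \<exists>b2\<in>B. a1 \<noteq> a2 \<and> b1 \<noteq> b2
     \<and> lt b1 a1 \<and> lt b2 a2 \<and> incomp lt a1 a2 \<and> incomp lt b1 b2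
     \<and> incomp lt b1 a2 \<and> incomp lt b2 a1)"

definition tangles :: "nat set \<Rightarrow> (nat \<Rightarrow> nat \<Rightarrow> bool) \<Rightarrow> nat set set" where
  "tangles P lt = {A \<union> B | A B. is_top P lt A \<and> is_bottom P lt B \<and> matched lt A B}"

definition in_tangle :: "nat set \<Rightarrow> (nat \<Rightarrow> nat \<Rightarrow> bool) \<Rightarrow> nat \<Rightarrow> bool" where
  "in_tangle P lt x \<longleftrightarrow> (\<exists>T\<in>tangles P lt. x \<in> T)"

definition clone_sets :: "nat set \<Rightarrow> (nat \<Rightarrow> nat \<Rightarrow> bool) \<Rightarrow> nat set set" where
  "clone_sets P lt = {{y\<in>P. \<not> in_tangle P lt y \<and> clone_rel P lt x y} | x. x \<in> P \<and> \<not> in_tangle P lt x}"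

definition parts :: "nat set \<Rightarrow> (nat \<Rightarrow> nat \<Rightarrow> bool) \<Rightarrow> nat set set" where
  "parts P lt = tangles P lt \<union> clone_sets P lt"

definition minimal_elems :: "nat set \<Rightarrow> (nat \<Rightarrow> nat \<Rightarrow> bool) \<Rightarrow> nat set" where
  "minimal_elems S lt = {x\<in>S. \<not> (\<exists>y\<in>S. lt y x)}"

text \<open>levels_upto P lt k = L_1 \<union> ... \<union> L_k\<close>
primrec levels_upto :: "nat set \<Rightarrow> (nat \<Rightarrow> nat \<Rightarrow> bool) \<Rightarrow> nat \<Rightarrow> nat set" where
  "levels_upto P lt 0 = {}"
| "levels_upto P lt (Suc k) = levels_upto P lt k \<union> minimal_elems (P - levels_upto P lt k) lt"

definition level :: "nat set \<Rightarrow> (nat \<Rightarrow> nat \<Rightarrow> bool) \<Rightarrow> nat \<Rightarrow> nat" where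
  "level P lt a = (LEAST k. a \<in> levels_upto P lt k)"

text \<open>C i is c_i, T i is t_{i,i+1}; only indices i \<ge> 1 belong to the alphabet.\<close>
datatype letter = C nat | T nat

definition valid_letter :: "letter \<Rightarrow> bool" where
  "valid_letter x = (case x of C i \<Rightarrow> 1 \<le> i | T i \<Rightarrow> 1 \<le> i)"

definition valid_word :: "letter list \<Rightarrow> bool" where
  "valid_word w \<longleftrightarrow> (\<forall>x\<in>set w. valid_letter x)"

fun commutes :: "letter \<Rightarrow> letter \<Rightarrow> bool" where
  "commutes (C i) (C j) = (i + 2 \<le> j \<or> j + 2 \<le> i)"
| "commutes (C i) (T j) = (i + 2 \<le> j \<or> j + 3 \<le> i)"
| "commutes (T j) (C i) = (i + 2 \<le> j \<or> j + 3 \<le> i)"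
| "commutes (T i) (T j) = (i + 3 \<le> j \<or> j + 3 \<le> i)"

definition swap_step :: "letter list \<Rightarrow> letter list \<Rightarrow> bool" where
  "swap_step w v \<longleftrightarrow> (\<exists>u z x y. w = u @ [x, y] @ z \<and> v = u @ [y, x] @ z \<and> commutes x y)"

text \<open>The element of M represented by a word: its equivalence class of words.\<close>
definition trace_class :: "letter list \<Rightarrow> letter list set" where
  "trace_class w = {v. valid_word v \<and> swap_step\<^sup>*\<^sup>* w v}"

definition monoid_M :: "letter list set set" where
  "monoid_M = {trace_class w | w. valid_word w}"

definition part_letter :: "nat set \<Rightarrow> (nat \<Rightarrow> nat \<Rightarrow> bool) \<Rightarrow> nat set \<Rightarrow> letter" where
  "part_letter P lt X = (if X \<in> tangles P lt then T (Min (level P lt ` X))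
                         else C (Min (level P lt ` X)))"

definition compatible_listing :: "nat set \<Rightarrow> (nat \<Rightarrow> nat \<Rightarrow> bool) \<Rightarrow> nat set list \<Rightarrow> bool" where
  "compatible_listing P lt Xs \<longleftrightarrow> distinct Xs \<and> set Xs = parts P lt \<and>
     (\<forall>i<length Xs. \<forall>j<length Xs. i \<noteq> j \<longrightarrow> (\<forall>a\<in>Xs ! i. \<forall>b\<in>Xs ! j.
        lt a b \<longleftrightarrow> (level P lt a + 2 \<le> level P lt b
                    \<or> (level P lt a + 1 = level P lt b \<and> i < j))))"

definition listing_word :: "nat set \<Rightarrow> (nat \<Rightarrow> nat \<Rightarrow> bool) \<Rightarrow> nat set list \<Rightarrow> letter list" where
  "listing_word P lt Xs = map (part_letter P lt) Xs"

text \<open>m is the skeleton of P: the image in M of the word of a compatible listing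
(all compatible listings give the same image).\<close>
definition is_skeleton :: "nat set \<Rightarrow> (nat \<Rightarrow> nat \<Rightarrow> bool) \<Rightarrow> letter list set \<Rightarrow> bool" where
  "is_skeleton P lt m \<longleftrightarrow> (\<exists>Xs. compatible_listing P lt Xs \<and> trace_class (listing_word P lt Xs) = m)"

end

theory Submission
  imports Defs
begin

locale fp =
  fixes P :: "nat set" and lt :: "nat \<Rightarrow> nat \<Rightarrow> bool"
  assumes fp: "finite_poset P lt"
begin

lemma fin: "finite P" using fp by (simp add: finite_poset_def)
lemma irr: "a \<in> P \<Longrightarrow> \<not> lt a a" using fp by (simp add: finite_poset_def)
lemma ptrans: "a \<in> P \<Longrightarrow> b \<in> P \<Longrightarrow> c \<in> P \<Longrightarrow> lt a b \<Longrightarrow> lt b c \<Longrightarrow> lt a c"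
  using fp unfolding finite_poset_def by blast

lemma lu_sub: "levels_upto P lt k \<subseteq> P"
  by (induction k) (auto simp: minimal_elems_def)

lemma lu_mono: "k \<le> k' \<Longrightarrow> levels_upto P lt k \<subseteq> levels_upto P lt k'"
proof (induction k' )
  case 0 then show ?case by simp
next
  case (Suc k') then show ?case by (cases "k = Suc k'") auto
qed

lemma lu_ex: "a \<in> P \<Longrightarrow> a \<in> levels_upto P lt (Suc (card (down_set P lt a)))"
proof (induction "card (down_set P lt a)" arbitrary: a rule: less_induct)
  case less
  have fd: "finite (down_set P lt q)" for q using fin by (simp add: down_set_def)
  have "q \<in> levels_upto P lt (card (down_set P lt a))" if q: "q \<in> P" "lt q a" for q
  proof -
    have "down_set P lt q \<subseteq> down_set P lt a"
      using q less.prems by (auto simp: down_set_def intro: ptrans)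
    moreover have "q \<in> down_set P lt a" "q \<notin> down_set P lt q"
      using q irr by (auto simp: down_set_def)
    ultimately have "down_set P lt q \<subset> down_set P lt a" by blast
    hence c: "card (down_set P lt q) < card (down_set P lt a)" by (rule psubset_card_mono[OF fd])
    have "Suc (card (down_set P lt q)) \<le> card (down_set P lt a)" using c by simp
    from less.hyps[OF c q(1)] lu_mono[OF this]
    show ?thesis by blast
  qed
  then have "a \<in> levels_upto P lt (card (down_set P lt a)) \<union> minimal_elems (P - levels_upto P lt (card (down_set P lt a))) lt"
    unfolding minimal_elems_def using less.prems by blast
  then show ?case by (simp only: levels_upto.simps)
qed

lemma lu_ex': "a \<in> P \<Longrightarrow> \<exists>k. a \<in> levels_upto P lt k" using lu_ex by blast

lemma lu_iff: "a \<in> P \<Longrightarrow> a \<in> levels_upto P lt k \<longleftrightarrow> level P lt a \<le> k"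
proof
  assume "a \<in> levels_upto P lt k" then show "level P lt a \<le> k"
    unfolding level_def by (rule Least_le)
next
  assume a: "a \<in> P" and le: "level P lt a \<le> k"
  have "a \<in> levels_upto P lt (level P lt a)"
    unfolding level_def using lu_ex'[OF a] by (rule LeastI_ex)
  then show "a \<in> levels_upto P lt k" using lu_mono[OF le] by blast
qed

lemma level_ge1: "a \<in> P \<Longrightarrow> level P lt a \<ge> 1"
  using lu_iff[of a 0] by (cases "level P lt a") auto

lemma level_lt: assumes "a \<in> P" "b \<in> P" "lt a b" shows "level P lt a < level P lt b"
proof -
  obtain k where k: "level P lt b = Suc k" using level_ge1[OF assms(2)] by (cases "level P lt b") auto
  have b1: "b \<in> levels_upto P lt (Suc k)" using lu_iff[OF assms(2), of "Suc k"] k by simp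
  have b2: "b \<notin> levels_upto P lt k" using lu_iff[OF assms(2), of k] k by simp
  have "b \<in> minimal_elems (P - levels_upto P lt k) lt" using b1 b2 by (simp del: levels_upto.simps(2) add: levels_upto.simps(2)[of P lt k])
  hence "a \<in> levels_upto P lt k" using assms by (auto simp: minimal_elems_def)
  then show ?thesis using lu_iff[OF assms(1)] k by simp
qed

lemma level_pred: assumes "a \<in> P" "level P lt a \<ge> 2"
  shows "\<exists>q\<in>P. lt q a \<and> Suc (level P lt q) = level P lt a"
proof -
  obtain k where k: "level P lt a = Suc (Suc k)" using assms(2)
    by (metis add_2_eq_Suc le_Suc_ex)
  have "a \<notin> levels_upto P lt (Suc k)" using lu_iff[OF assms(1), of "Suc k"] k by simp
  hence "a \<notin> minimal_elems (P - levels_upto P lt k) lt" "a \<notin> levels_upto P lt k" by auto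
  then obtain y where y: "y \<in> P" "y \<notin> levels_upto P lt k" "lt y a"
    using assms(1) by (auto simp: minimal_elems_def)
  have "level P lt y > k" using y lu_iff by auto
  moreover have "level P lt y < level P lt a" using level_lt y assms by auto
  ultimately show ?thesis using y k by (intro bexI[of _ y]) auto
qed

lemma level_char:
  assumes a: "\<And>x y. x \<in> P \<Longrightarrow> y \<in> P \<Longrightarrow> lt x y \<Longrightarrow> L x < L y"
      and b: "\<And>x. x \<in> P \<Longrightarrow> L x \<ge> 2 \<Longrightarrow> \<exists>q\<in>P. lt q x \<and> Suc (L q) = L x"
      and c: "\<And>x. x \<in> P \<Longrightarrow> L x \<ge> 1"
      and x: "x \<in> P"
  shows "level P lt x = L x"
proof -
  have eq: "levels_upto P lt k = {a\<in>P. L a \<le> k}" for k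
  proof (induction k)
    case 0 then show ?case using c by fastforce
  next
    case (Suc k)
    have "minimal_elems (P - levels_upto P lt k) lt = {a\<in>P. L a = Suc k}"
    proof (intro equalityI subsetI)
      fix z assume z: "z \<in> minimal_elems (P - levels_upto P lt k) lt"
      hence z1: "z \<in> P" "L z > k" and nz: "\<not> (\<exists>y\<in>P - levels_upto P lt k. lt y z)"
        using Suc by (auto simp: minimal_elems_def)
      show "z \<in> {a\<in>P. L a = Suc k}"
      proof (rule ccontr)
        assume "z \<notin> {a\<in>P. L a = Suc k}"
        hence "L z \<ge> 2" using z1 by auto
        then obtain q where "q \<in> P" "lt q z" "Suc (L q) = L z" using b z1 by blast
        thus False using nz Suc z1 \<open>z \<notin> _\<close> by auto
      qed
    next
      fix z assume "z \<in> {a\<in>P. L a = Suc k}"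
      hence z: "z \<in> P" "L z = Suc k" by auto
      have "y \<in> levels_upto P lt k" if "y \<in> P" "lt y z" for y
        using a[OF that(1) z(1) that(2)] z Suc that by auto
      then show "z \<in> minimal_elems (P - levels_upto P lt k) lt"
        using Suc z by (auto simp: minimal_elems_def)
    qed
    then show ?case using Suc by auto
  qed
  show ?thesis unfolding level_def eq using x
    by (intro Least_equality) auto
qed

lemma level_down: assumes "a \<in> P" "b \<in> P" "down_set P lt a = down_set P lt b"
  shows "level P lt a = level P lt b"
proof -
  have "level P lt a \<le> level P lt b" if "a \<in> P" "b \<in> P" "down_set P lt a = down_set P lt b" for a b
  proof (cases "level P lt a \<ge> 2")
    case True
    note h = that
    obtain q where q: "q \<in> P" "lt q a" "Suc (level P lt q) = level P lt a" using level_pred h True by blast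
    hence "lt q b" using h by (auto simp: down_set_def)
    then show ?thesis using level_lt[of q b] q h by fastforce
  next
    case False then show ?thesis using level_ge1 that by fastforce
  qed
  then show ?thesis using assms by (metis le_antisym)
qed

end

locale fp31 = fp +
  assumes f31: "free31 P lt"
begin

lemma no31: "a\<in>P \<Longrightarrow> b\<in>P \<Longrightarrow> c\<in>P \<Longrightarrow> d\<in>P \<Longrightarrow> lt a b \<Longrightarrow> lt b c
   \<Longrightarrow> incomp lt d a \<Longrightarrow> incomp lt d b \<Longrightarrow> incomp lt d c \<Longrightarrow> False"
  using f31 unfolding free31_def by blast

lemma key: assumes "a \<in> P" "b \<in> P" "level P lt a + 2 \<le> level P lt b" shows "lt a b"
proof (rule ccontr)
  assume nab: "\<not> lt a b"
  obtain v where v: "v \<in> P" "lt v b" "Suc (level P lt v) = level P lt b"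
    using level_pred[OF assms(2)] assms level_ge1 by fastforce
  obtain u where u: "u \<in> P" "lt u v" "Suc (level P lt u) = level P lt v"
    using level_pred[OF v(1)] v assms level_ge1[OF assms(1)] by fastforce
  have "a \<noteq> u" using u v nab ptrans[of u v b] assms by blast
  have "\<not> lt a v" using v nab ptrans[of a v b] assms by blast
  have "\<not> lt a u" using u v \<open>\<not> lt a v\<close> ptrans[of a u v] assms by blast
  have "\<not> lt u a" "\<not> lt v a" "\<not> lt b a" using level_lt u v assms by fastforce+
  have "a \<noteq> v" "a \<noteq> b" using u v assms by auto
  then show False using no31[of u v b a] u v assms \<open>a \<noteq> u\<close> \<open>\<not> lt a u\<close> \<open>\<not> lt a v\<close> \<open>\<not> lt u a\<close>
    \<open>\<not> lt v a\<close> \<open>\<not> lt b a\<close> nab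
    unfolding incomp_def by blast
qed

lemma top_level: assumes "a \<in> P" "b \<in> P" "top_rel P lt a b" shows "level P lt a = level P lt b"
proof -
  have "\<not> level P lt a < level P lt b" if "a \<in> P" "b \<in> P" "top_rel P lt a b" for a b
  proof
    assume l: "level P lt a < level P lt b"
    note h = that
    show False
    proof (cases "level P lt a + 2 \<le> level P lt b")
      case True
      hence "lt a b" using key that by blast
      hence "down_set P lt a \<subseteq> down_set P lt b" using that by (auto simp: down_set_def intro: ptrans)
      then show False using that by (simp add: top_rel_def)
    next
      case False
      obtain d where d: "d \<in> P" "lt d a" "\<not> lt d b" using h(3) by (auto simp: top_rel_def down_set_def)
      have "level P lt d < level P lt a" using level_lt d h by blast
      hence "lt d b" using key d h l False by simp
      then show False using d by simp
    qed
  qed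
  moreover have "top_rel P lt b a" using assms(3) by (auto simp: top_rel_def)
  ultimately show ?thesis using assms by (meson linorder_neqE_nat)
qed

lemma bot_level: assumes "a \<in> P" "b \<in> P" "bot_rel P lt a b" shows "level P lt a = level P lt b"
proof -
  have "\<not> level P lt a < level P lt b" if "a \<in> P" "b \<in> P" "bot_rel P lt a b" for a b
  proof
    assume l: "level P lt a < level P lt b"
    note h = that
    show False
    proof (cases "level P lt a + 2 \<le> level P lt b")
      case True
      hence "lt a b" using key that by blast
      hence "up_set P lt b \<subseteq> up_set P lt a" using that by (auto simp: up_set_def intro: ptrans)
      then show False using that by (simp add: bot_rel_def)
    next
      case False
      obtain u where d: "u \<in> P" "lt b u" "\<not> lt a u" using h(3) by (auto simp: bot_rel_def up_set_def)
      have "level P lt b < level P lt u" using level_lt d h by blast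
      hence "lt a u" using key d h l False by simp
      then show False using d by simp
    qed
  qed
  moreover have "bot_rel P lt b a" using assms(3) by (auto simp: bot_rel_def)
  ultimately show ?thesis using assms by (meson linorder_neqE_nat)
qed

end

fun idx :: "letter \<Rightarrow> nat" where "idx (C i) = i" | "idx (T i) = i"
fun hi :: "letter \<Rightarrow> nat" where "hi (C i) = i" | "hi (T i) = Suc i"

lemma commutes_iff: "commutes x y \<longleftrightarrow> hi x + 2 \<le> idx y \<or> hi y + 2 \<le> idx x"
  by (cases x; cases y) auto

lemma comp_sub: "component P E a \<subseteq> P" by (auto simp: component_def)

lemma comp_inv:
  assumes "b \<in> component P E a"
    and "\<And>x y. x \<in> P \<Longrightarrow> y \<in> P \<Longrightarrow> E x y \<Longrightarrow> f x = f y"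
  shows "f b = f a"
proof -
  have "(\<lambda>x y. x \<in> P \<and> y \<in> P \<and> E x y)\<^sup>*\<^sup>* a b" using assms(1) by (auto simp: component_def)
  then show ?thesis
    by (induction rule: rtranclp_induct) (auto dest: assms(2))
qed

context fp31 begin

lemma tangle_struct: assumes "X \<in> tangles P lt"
  shows "X \<subseteq> P \<and> (\<exists>\<beta>. (\<forall>x\<in>X. level P lt x = \<beta> \<or> level P lt x = Suc \<beta>) \<and> (\<exists>x\<in>X. level P lt x = \<beta>))"
proof -
  obtain A B where X: "X = A \<union> B" and A: "is_top P lt A" and B: "is_bottom P lt B" and m: "matched lt A B"
    using assms by (auto simp: tangles_def)
  obtain a0 where a0: "a0 \<in> P" "A = component P (top_rel P lt) a0" using A by (auto simp: is_top_def)
  obtain b0 where b0: "b0 \<in> P" "B = component P (bot_rel P lt) b0" using B by (auto simp: is_bottom_def)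
  have lA: "level P lt x = level P lt a0" if "x \<in> A" for x
    using comp_inv[of x P "top_rel P lt" a0 "level P lt"] that a0 top_level by blast
  have lB: "level P lt x = level P lt b0" if "x \<in> B" for x
    using comp_inv[of x P "bot_rel P lt" b0 "level P lt"] that b0 bot_level by blast
  have AP: "A \<subseteq> P" "B \<subseteq> P" using a0 b0 comp_sub by blast+
  obtain a1 a2 b1 b2 where w: "a1 \<in> A" "a2 \<in> A" "b1 \<in> B" "lt b1 a1" "incomp lt b1 a2"
    using m unfolding matched_def by blast
  have "level P lt b1 < level P lt a1" using level_lt w AP by blast
  moreover have "\<not> level P lt b1 + 2 \<le> level P lt a2"
    using key[of b1 a2] w AP by (auto simp: incomp_def)
  moreover have "level P lt a1 = level P lt a0" "level P lt a2 = level P lt a0" "level P lt b1 = level P lt b0"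
    using lA lB w by auto
  ultimately have ab: "level P lt a0 = Suc (level P lt b0)" by linarith
  have "\<forall>x\<in>X. level P lt x = level P lt b0 \<or> level P lt x = Suc (level P lt b0)"
    using X lA lB ab by auto
  moreover have "\<exists>x\<in>X. level P lt x = level P lt b0" using X w(3) lB[OF w(3)] by blast
  moreover have "X \<subseteq> P" using X AP by blast
  ultimately show ?thesis by blast
qed

lemma clone_refl: "clone_rel P lt x x" by (simp add: clone_rel_def)

lemma clone_struct: assumes "X \<in> clone_sets P lt"
  shows cs_sub: "X \<subseteq> P" and cs_ne: "X \<noteq> {}" and cs_nt: "X \<notin> tangles P lt"
   and cs_lv: "\<forall>a\<in>X. \<forall>b\<in>X. level P lt a = level P lt b"
   and cs_nit: "\<forall>a\<in>X. \<not> in_tangle P lt a"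
   and cs_eq: "\<forall>a\<in>X. X = {y\<in>P. \<not> in_tangle P lt y \<and> clone_rel P lt a y}"
proof -
  obtain x where x: "x \<in> P" "\<not> in_tangle P lt x" "X = {y\<in>P. \<not> in_tangle P lt y \<and> clone_rel P lt x y}"
    using assms by (auto simp: clone_sets_def)
  have xX: "x \<in> X" using x clone_refl by auto
  then show "X \<noteq> {}" by blast
  show "X \<notin> tangles P lt" using xX x(2) by (auto simp: in_tangle_def)
  have lv: "level P lt a = level P lt x" if "a \<in> X" for a
    using level_down[of a x] that x by (auto simp: clone_rel_def)
  then show "\<forall>a\<in>X. \<forall>b\<in>X. level P lt a = level P lt b" by metis
  show "\<forall>a\<in>X. X = {y\<in>P. \<not> in_tangle P lt y \<and> clone_rel P lt a y}"
  proof
    fix a assume a: "a \<in> X"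
    have "down_set P lt x = down_set P lt a" "up_set P lt x = up_set P lt a"
      using a x by (auto simp: clone_rel_def)
    hence "clone_rel P lt a y = clone_rel P lt x y" for y by (simp add: clone_rel_def)
    then show "X = {y\<in>P. \<not> in_tangle P lt y \<and> clone_rel P lt a y}" using x(3) by simp
  qed
  show "\<forall>a\<in>X. \<not> in_tangle P lt a" using x(3) by blast
  show "X \<subseteq> P" using x(3) by blast
qed

lemma parts_struct: assumes "X \<in> parts P lt"
  shows "X \<subseteq> P \<and> X \<noteq> {} \<and> (\<forall>a\<in>X. idx (part_letter P lt X) \<le> level P lt a \<and> level P lt a \<le> hi (part_letter P lt X))"
proof (cases "X \<in> tangles P lt")
  case True
  obtain \<beta> where b: "\<forall>x\<in>X. level P lt x = \<beta> \<or> level P lt x = Suc \<beta>" "\<exists>x\<in>X. level P lt x = \<beta>" and XP: "X \<subseteq> P"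
    using tangle_struct[OF True] by blast
  have fX: "finite X" using XP fin finite_subset by blast
  have "Min (level P lt ` X) = \<beta>"
  proof (rule Min_eqI)
    show "finite (level P lt ` X)" using fX by simp
    show "\<beta> \<in> level P lt ` X" using b(2) by force
    fix y assume "y \<in> level P lt ` X"
    then obtain a where "a \<in> X" "y = level P lt a" by blast
    then show "\<beta> \<le> y" using b(1) by force
  qed
  hence pl: "part_letter P lt X = T \<beta>" using True by (simp add: part_letter_def)
  have "X \<noteq> {}" using b(2) by blast
  moreover have "\<forall>a\<in>X. \<beta> \<le> level P lt a \<and> level P lt a \<le> Suc \<beta>" using b(1) by (metis le_SucI order_refl)
  ultimately show ?thesis using XP pl by simp
next
  case False
  hence cs: "X \<in> clone_sets P lt" using assms by (auto simp: parts_def)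
  note s1 = cs_sub[OF cs] cs_ne[OF cs] and s2 = cs_lv[OF cs]
  obtain x where x: "x \<in> X" using s1(2) by blast
  have fX: "finite X" using s1(1) fin finite_subset by blast
  have "Min (level P lt ` X) = level P lt x"
  proof (rule Min_eqI)
    show "finite (level P lt ` X)" using fX by simp
    show "level P lt x \<in> level P lt ` X" using x by simp
    fix y assume "y \<in> level P lt ` X"
    then obtain a where a: "a \<in> X" "y = level P lt a" by blast
    have "level P lt a = level P lt x" using bspec[OF bspec[OF s2 a(1)] x] .
    then show "level P lt x \<le> y" using a(2) by simp
  qed
  hence pl: "part_letter P lt X = C (level P lt x)" using False by (simp add: part_letter_def)
  have "\<forall>a\<in>X. level P lt x \<le> level P lt a \<and> level P lt a \<le> level P lt x"
  proof
    fix a assume "a \<in> X"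
    have "level P lt a = level P lt x" using bspec[OF bspec[OF s2 \<open>a \<in> X\<close>] x] .
    then show "level P lt x \<le> level P lt a \<and> level P lt a \<le> level P lt x" by simp
  qed
  then show ?thesis using s1 pl by simp
qed

lemma cover: assumes "x \<in> P" shows "\<exists>X\<in>parts P lt. x \<in> X"
proof (cases "in_tangle P lt x")
  case True
  then obtain T where "T \<in> tangles P lt" "x \<in> T" unfolding in_tangle_def by blast
  then show ?thesis unfolding parts_def by blast
next
  case False
  define X where "X = {y\<in>P. \<not> in_tangle P lt y \<and> clone_rel P lt x y}"
  have "X \<in> clone_sets P lt" unfolding clone_sets_def X_def using assms False by blast
  moreover have "x \<in> X" unfolding X_def using assms False clone_refl by simp
  ultimately show ?thesis unfolding parts_def by blast
qed

end

lemma pl_cases: "part_letter P lt X = T (Min (level P lt ` X)) \<or> part_letter P lt X = C (Min (level P lt ` X))"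
  by (simp add: part_letter_def)

context fp31 begin

lemma parts_min: assumes "X \<in> parts P lt" shows "\<exists>a\<in>X. level P lt a = idx (part_letter P lt X)"
proof -
  have "X \<subseteq> P" "X \<noteq> {}" using parts_struct[OF assms] by blast+
  hence f: "finite X" using fin finite_subset by blast
  have "idx (part_letter P lt X) = Min (level P lt ` X)" using pl_cases[of P lt X] by auto
  moreover have "Min (level P lt ` X) \<in> level P lt ` X" using f \<open>X \<noteq> {}\<close> by (intro Min_in) auto
  ultimately show ?thesis by auto
qed

lemma cl_rel: assumes "compatible_listing P lt Ys" "i < length Ys" "j < length Ys" "i \<noteq> j"
   "a \<in> Ys ! i" "b \<in> Ys ! j"
 shows "lt a b \<longleftrightarrow> (level P lt a + 2 \<le> level P lt b \<or> (level P lt a + 1 = level P lt b \<and> i < j))"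
  using assms unfolding compatible_listing_def by blast

lemma cl_part: assumes "compatible_listing P lt Ys" "i < length Ys" shows "Ys ! i \<in> parts P lt"
  using assms unfolding compatible_listing_def by (metis nth_mem)

lemma cl_cover: assumes "compatible_listing P lt Ys" "x \<in> P" shows "\<exists>j<length Ys. x \<in> Ys ! j"
proof -
  obtain X where "X \<in> parts P lt" "x \<in> X" using cover[OF assms(2)] by blast
  then obtain j where "j < length Ys" "Ys ! j = X" using assms(1) unfolding compatible_listing_def
    by (metis in_set_conv_nth)
  then show ?thesis using \<open>x \<in> X\<close> by blast
qed

lemma cl_first: assumes "compatible_listing P lt Ys" "Ys \<noteq> []"
  shows "idx (part_letter P lt (Ys ! 0)) = 1"
proof (rule ccontr)
  assume ne: "idx (part_letter P lt (Ys ! 0)) \<noteq> 1"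
  have X: "Ys ! 0 \<in> parts P lt" using cl_part assms by auto
  obtain a where a: "a \<in> Ys ! 0" "level P lt a = idx (part_letter P lt (Ys ! 0))" using parts_min[OF X] by blast
  have aP: "a \<in> P" using parts_struct[OF X] a by blast
  have "level P lt a \<ge> 2" using level_ge1[OF aP] ne a by simp
  then obtain q where q: "q \<in> P" "lt q a" "Suc (level P lt q) = level P lt a" using level_pred aP by blast
  obtain j where j: "j < length Ys" "q \<in> Ys ! j" using cl_cover assms q by blast
  show False
  proof (cases "j = 0")
    case True
    then show False using parts_struct[OF X] j q a by fastforce
  next
    case False
    then show False using cl_rel[OF assms(1) j(1) _ False j(2) a(1)] assms q by simp
  qed
qed

lemma cl_noCC: assumes cl: "compatible_listing P lt Ys" and k: "Suc k < length Ys"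
  and x: "part_letter P lt (Ys ! k) = C i" and y: "part_letter P lt (Ys ! Suc k) = C i"
  shows False
proof -
  have k0: "k < length Ys" using k by simp
  have X: "Ys ! k \<in> parts P lt" and Y: "Ys ! Suc k \<in> parts P lt" using cl_part cl k by auto
  have cX: "Ys ! k \<in> clone_sets P lt" using X x unfolding parts_def part_letter_def by (auto split: if_splits)
  have cY: "Ys ! Suc k \<in> clone_sets P lt" using Y y unfolding parts_def part_letter_def by (auto split: if_splits)
  have lX: "level P lt a = i" if "a \<in> Ys ! k" for a using parts_struct[OF X] x that by fastforce
  have lY: "level P lt a = i" if "a \<in> Ys ! Suc k" for a using parts_struct[OF Y] y that by fastforce
  obtain a where a: "a \<in> Ys ! k" using cs_ne[OF cX] by blast
  obtain b where b: "b \<in> Ys ! Suc k" using cs_ne[OF cY] by blast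
  have aP: "a \<in> P" using cs_sub[OF cX] a by blast
  have bP: "b \<in> P" using cs_sub[OF cY] b by blast
  have la: "level P lt a = i" using lX a by blast
  have lb: "level P lt b = i" using lY b by blast
  have same: "(lt x a \<longleftrightarrow> lt x b) \<and> (lt a x \<longleftrightarrow> lt b x)" if xP: "x \<in> P" for x
  proof -
    obtain j where j: "j < length Ys" "x \<in> Ys ! j" using cl_cover cl xP by blast
    show ?thesis
    proof (cases "j = k")
      case True
      hence lx: "level P lt x = i" using lX j by blast
      have "\<not> lt x a" "\<not> lt a x" using level_lt[of x a] level_lt[of a x] lx la xP aP by auto
      moreover have "\<not> lt x b" "\<not> lt b x"
        using cl_rel[OF cl j(1) k _ j(2) b] cl_rel[OF cl k j(1) _ b j(2)] True lx lb by auto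
      ultimately show ?thesis by blast
    next
      case False
      show ?thesis
      proof (cases "j = Suc k")
        case True
        hence lx: "level P lt x = i" using lY j by blast
        have "\<not> lt x b" "\<not> lt b x" using level_lt[of x b] level_lt[of b x] lx lb xP bP by auto
        moreover have "\<not> lt x a" "\<not> lt a x"
          using cl_rel[OF cl j(1) k0 _ j(2) a] cl_rel[OF cl k0 j(1) _ a j(2)] True lx la by auto
        ultimately show ?thesis by blast
      next
        case False2: False
        have "lt x a \<longleftrightarrow> (level P lt x + 2 \<le> i \<or> (level P lt x + 1 = i \<and> j < k))"
          using cl_rel[OF cl j(1) k0 False j(2) a] la by simp
        moreover have "lt x b \<longleftrightarrow> (level P lt x + 2 \<le> i \<or> (level P lt x + 1 = i \<and> j < Suc k))"
          using cl_rel[OF cl j(1) k False2 j(2) b] lb by simp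
        moreover have "lt a x \<longleftrightarrow> (i + 2 \<le> level P lt x \<or> (i + 1 = level P lt x \<and> k < j))"
          using cl_rel[OF cl k0 j(1) _ a j(2)] False la by auto
        moreover have "lt b x \<longleftrightarrow> (i + 2 \<le> level P lt x \<or> (i + 1 = level P lt x \<and> Suc k < j))"
          using cl_rel[OF cl k j(1) _ b j(2)] False2 lb by auto
        moreover have "j < k \<longleftrightarrow> j < Suc k" "k < j \<longleftrightarrow> Suc k < j" using False False2 by auto
        ultimately show ?thesis by simp
      qed
    qed
  qed
  have "down_set P lt a = down_set P lt b" unfolding down_set_def using same by blast
  moreover have "up_set P lt a = up_set P lt b" unfolding up_set_def using same by blast
  ultimately have cr: "clone_rel P lt b a" by (simp add: clone_rel_def)
  have "Ys ! k = {y\<in>P. \<not> in_tangle P lt y \<and> clone_rel P lt a y}" using cs_eq[OF cX] a by blast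
  also have "\<dots> = {y\<in>P. \<not> in_tangle P lt y \<and> clone_rel P lt b y}"
    using cr by (auto simp: clone_rel_def)
  also have "\<dots> = Ys ! Suc k" using cs_eq[OF cY] b by blast
  finally have "Ys ! k = Ys ! Suc k" .
  moreover have "distinct Ys" using cl by (simp add: compatible_listing_def)
  ultimately show False using k by (simp add: nth_eq_iff_index_eq)
qed

end

context fp31 begin

lemma cl_swap: assumes cl: "compatible_listing P lt Ys" and sw: "swap_step (listing_word P lt Ys) v"
  shows "\<exists>Ys'. compatible_listing P lt Ys' \<and> listing_word P lt Ys' = v"
proof -
  obtain u z x y where w: "map (part_letter P lt) Ys = u @ [x, y] @ z" and v: "v = u @ [y, x] @ z"
    and c: "commutes x y" using sw unfolding swap_step_def listing_word_def by blast
  define k where "k = length u"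
  have len: "length Ys = length u + 2 + length z" using arg_cong[OF w, of length] by simp
  hence k: "Suc k < length Ys" unfolding k_def by simp
  have px: "part_letter P lt (Ys ! k) = x"
    using arg_cong[OF w, of "\<lambda>l. l ! k"] k unfolding k_def by simp
  have py: "part_letter P lt (Ys ! Suc k) = y"
    using arg_cong[OF w, of "\<lambda>l. l ! Suc k"] k unfolding k_def by (simp add: nth_append)
  define Ys' where "Ys' = Ys[k := Ys ! Suc k, Suc k := Ys ! k]"
  have len': "length Ys' = length Ys" unfolding Ys'_def by simp
  have mw: "map (part_letter P lt) Ys' = v"
  proof -
    have "map (part_letter P lt) Ys' = (map (part_letter P lt) Ys)[k := y, Suc k := x]"
      unfolding Ys'_def using px py by (simp add: map_update)
    also have "\<dots> = v" unfolding w v k_def by (simp add: list_update_append)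
    finally show ?thesis .
  qed
  define \<sigma> where "\<sigma> j = (if j = k then Suc k else if j = Suc k then k else j)" for j
  have nth': "Ys' ! j = Ys ! \<sigma> j" if "j < length Ys" for j
    unfolding Ys'_def \<sigma>_def using that k by (auto simp: nth_list_update)
  have \<sigma>l: "\<sigma> j < length Ys" if "j < length Ys" for j using that k unfolding \<sigma>_def by auto
  have \<sigma>inj: "\<sigma> i \<noteq> \<sigma> j" if "i \<noteq> j" for i j using that unfolding \<sigma>_def by auto
  have lvX: "idx x \<le> level P lt a \<and> level P lt a \<le> hi x" if "a \<in> Ys ! k" for a
    using parts_struct[OF cl_part[OF cl, of k]] k that px by auto
  have lvY: "idx y \<le> level P lt a \<and> level P lt a \<le> hi y" if "a \<in> Ys ! Suc k" for a
    using parts_struct[OF cl_part[OF cl, of "Suc k"]] k that py by auto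
  have cc: "hi x + 2 \<le> idx y \<or> hi y + 2 \<le> idx x" using c commutes_iff by blast
  have "compatible_listing P lt Ys'"
    unfolding compatible_listing_def
  proof (intro conjI allI impI ballI)
    show "distinct Ys'" using cl k unfolding Ys'_def compatible_listing_def by simp
    show "set Ys' = parts P lt" using cl k unfolding Ys'_def compatible_listing_def by simp
    fix i j a b assume ij: "i < length Ys'" "j < length Ys'" "i \<noteq> j" and a: "a \<in> Ys' ! i" and b: "b \<in> Ys' ! j"
    have i: "i < length Ys" and j: "j < length Ys" using ij len' by auto
    have a': "a \<in> Ys ! \<sigma> i" and b': "b \<in> Ys ! \<sigma> j" using a b nth' i j by auto
    have r: "lt a b \<longleftrightarrow> (level P lt a + 2 \<le> level P lt b \<or> (level P lt a + 1 = level P lt b \<and> \<sigma> i < \<sigma> j))"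
      using cl_rel[OF cl \<sigma>l[OF i] \<sigma>l[OF j] \<sigma>inj[OF ij(3)] a' b'] .
    show "lt a b \<longleftrightarrow> (level P lt a + 2 \<le> level P lt b \<or> (level P lt a + 1 = level P lt b \<and> i < j))"
    proof (cases "(i = k \<and> j = Suc k) \<or> (i = Suc k \<and> j = k)")
      case True
      hence "level P lt a + 1 \<noteq> level P lt b"
      proof
        assume "i = k \<and> j = Suc k"
        hence "a \<in> Ys ! Suc k" "b \<in> Ys ! k" using a' b' unfolding \<sigma>_def by auto
        then show ?thesis using lvX lvY cc by fastforce
      next
        assume "i = Suc k \<and> j = k"
        hence "a \<in> Ys ! k" "b \<in> Ys ! Suc k" using a' b' unfolding \<sigma>_def by auto
        then show ?thesis using lvX lvY cc by fastforce
      qed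
      then show ?thesis using r by auto
    next
      case False
      hence "\<sigma> i < \<sigma> j \<longleftrightarrow> i < j" using ij(3) unfolding \<sigma>_def by auto
      then show ?thesis using r by simp
    qed
  qed
  then show ?thesis using mw unfolding listing_word_def by blast
qed

lemma cl_star: assumes "compatible_listing P lt Ys" "swap_step\<^sup>*\<^sup>* (listing_word P lt Ys) v"
  shows "\<exists>Ys'. compatible_listing P lt Ys' \<and> listing_word P lt Ys' = v"
  using assms(2,1)
proof (induction rule: rtranclp_induct)
  case base then show ?case by blast
next
  case (step y z)
  then obtain Ys' where "compatible_listing P lt Ys'" "listing_word P lt Ys' = y" by blast
  then show ?case using cl_swap step(2) by blast
qed

end

lemma forward:
  assumes fp: "finite_poset P lt" and ne: "P \<noteq> {}" and f: "free31 P lt" and sk: "is_skeleton P lt m"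
  shows "(\<forall>w\<in>m. \<exists>w'. w = C 1 # w' \<or> w = T 1 # w') \<and>
          (\<forall>w\<in>m. \<not> (\<exists>u v i. i \<ge> 1 \<and> w = u @ [C i, C i] @ v))"
proof -
  interpret fp31 P lt using fp f by (unfold_locales) auto
  obtain Xs where Xs: "compatible_listing P lt Xs" "trace_class (listing_word P lt Xs) = m"
    using sk unfolding is_skeleton_def by blast
  have get: "\<exists>Ys. compatible_listing P lt Ys \<and> map (part_letter P lt) Ys = w" if "w \<in> m" for w
  proof -
    have "swap_step\<^sup>*\<^sup>* (listing_word P lt Xs) w" using that Xs(2) unfolding trace_class_def by blast
    then show ?thesis using cl_star[OF Xs(1)] unfolding listing_word_def by blast
  qed
  have A: "\<exists>w'. w = C 1 # w' \<or> w = T 1 # w'" if wm: "w \<in> m" for w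
  proof -
    obtain Ys where Ys: "compatible_listing P lt Ys" "map (part_letter P lt) Ys = w" using get wm by blast
    obtain x where "x \<in> P" using ne by blast
    then obtain j where "j < length Ys" using cl_cover[OF Ys(1)] by blast
    hence nz: "Ys \<noteq> []" by auto
    have i1: "idx (part_letter P lt (Ys ! 0)) = 1" using cl_first[OF Ys(1) nz] .
    obtain Y Ys2 where YY: "Ys = Y # Ys2" using nz by (cases Ys) auto
    have "w = part_letter P lt Y # map (part_letter P lt) Ys2" using Ys(2) YY by simp
    moreover have "part_letter P lt Y = C 1 \<or> part_letter P lt Y = T 1"
      using i1 YY pl_cases[of P lt Y] by auto
    ultimately show ?thesis by blast
  qed
  have B: "\<not> (\<exists>u v i. i \<ge> 1 \<and> w = u @ [C i, C i] @ v)" if wm: "w \<in> m" for w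
  proof
    assume "\<exists>u v i. i \<ge> 1 \<and> w = u @ [C i, C i] @ v"
    then obtain u v i where uv: "w = u @ [C i, C i] @ v" by blast
    obtain Ys where Ys: "compatible_listing P lt Ys" "map (part_letter P lt) Ys = w" using get wm by blast
    have len: "length Ys = length u + 2 + length v" using arg_cong[OF Ys(2), of length] uv by simp
    have "part_letter P lt (Ys ! length u) = C i"
      using arg_cong[OF Ys(2), of "\<lambda>l. l ! length u"] uv len by simp
    moreover have "part_letter P lt (Ys ! Suc (length u)) = C i"
      using arg_cong[OF Ys(2), of "\<lambda>l. l ! Suc (length u)"] uv len by (simp add: nth_append)
    ultimately show False using cl_noCC[OF Ys(1), of "length u" i] len by simp
  qed
  show ?thesis using A B by blast
qed


lemma commutes_sym: "commutes x y \<Longrightarrow> commutes y x"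
  by (cases x; cases y) auto

lemma valid_idx: "valid_word w \<Longrightarrow> x \<in> set w \<Longrightarrow> idx x \<ge> 1"
  unfolding valid_word_def valid_letter_def by (cases x) auto

lemma hi_idx: "idx x \<le> hi x" "hi x \<le> Suc (idx x)" by (cases x; simp)+

lemma move_left:
  assumes "k < length w" "l \<le> k" "\<forall>j. l \<le> j \<and> j < k \<longrightarrow> commutes (w!j) (w!k)"
  shows "swap_step\<^sup>*\<^sup>* w (take l w @ w!k # drop l (take k w) @ drop (Suc k) w)"
  using assms
proof (induction "k - l" arbitrary: l)
  case 0
  hence "l = k" by simp
  then show ?case using 0 by (simp add: id_take_nth_drop[symmetric])
next
  case (Suc d)
  hence lk: "l < k" by simp
  have IH: "swap_step\<^sup>*\<^sup>* w (take (Suc l) w @ w!k # drop (Suc l) (take k w) @ drop (Suc k) w)"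
    using Suc.hyps(1)[of "Suc l"] Suc.hyps(2) Suc.prems lk by simp
  define R where "R = drop (Suc l) (take k w) @ drop (Suc k) w"
  have e1: "take (Suc l) w @ w!k # drop (Suc l) (take k w) @ drop (Suc k) w = take l w @ [w!l, w!k] @ R"
    unfolding R_def using lk Suc.prems(1) by (simp add: take_Suc_conv_app_nth)
  have e2: "take l w @ w!k # drop l (take k w) @ drop (Suc k) w = take l w @ [w!k, w!l] @ R"
    unfolding R_def using lk Suc.prems(1)
    by (simp add: Cons_nth_drop_Suc[symmetric])
  have "swap_step (take l w @ [w!l, w!k] @ R) (take l w @ [w!k, w!l] @ R)"
    unfolding swap_step_def using Suc.prems(3) lk by blast
  then show ?case using IH e1 e2 by simp
qed

lemma move_set: "k < length w \<Longrightarrow> set (take l w @ w!k # drop l (take k w) @ drop (Suc k) w) \<subseteq> set w"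
  by (auto dest: in_set_takeD in_set_dropD)

definition inl :: "nat \<Rightarrow> letter \<Rightarrow> bool" where "inl v x \<longleftrightarrow> idx x \<le> v \<and> v \<le> hi x"

locale wd =
  fixes w0 :: "letter list"
  assumes v0: "valid_word w0"
    and H1: "\<forall>w\<in>trace_class w0. \<exists>w'. w = C 1 # w' \<or> w = T 1 # w'"
    and H2: "\<forall>w\<in>trace_class w0. \<not> (\<exists>u v i. i \<ge> 1 \<and> w = u @ [C i, C i] @ v)"
begin

lemma in_tc: "swap_step\<^sup>*\<^sup>* w0 w \<Longrightarrow> set w \<subseteq> set w0 \<Longrightarrow> w \<in> trace_class w0"
  using v0 unfolding trace_class_def valid_word_def by blast

lemma idx1: "k < length w0 \<Longrightarrow> idx (w0 ! k) \<ge> 1" using valid_idx[OF v0] nth_mem by blast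

lemma closure:
  assumes sup: "\<forall>j<k. idx (w0!j) = 1 \<or> (\<exists>j'<j. inl (idx (w0!j) - 1) (w0!j'))"
    and jk: "j < k" and k: "k \<le> length w0"
  shows "\<forall>u. 1 \<le> u \<and> u \<le> hi (w0!j) \<longrightarrow> (\<exists>j'\<le>j. inl u (w0!j'))"
  using jk
proof (induction j rule: less_induct)
  case (less j)
  show ?case
  proof (intro allI impI)
    fix u assume u: "1 \<le> u \<and> u \<le> hi (w0!j)"
    show "\<exists>j'\<le>j. inl u (w0!j')"
    proof (cases "idx (w0!j) \<le> u")
      case True then show ?thesis using u by (auto simp: inl_def)
    next
      case False
      hence "idx (w0!j) \<noteq> 1" using u by simp
      then obtain j' where j': "j' < j" "inl (idx (w0!j) - 1) (w0!j')" using sup less.prems by blast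
      have "u \<le> hi (w0!j')" using j'(2) False by (auto simp: inl_def)
      then obtain j'' where "j'' \<le> j'" "inl u (w0!j'')" using less.IH[OF j'(1)] j'(1) less.prems u by force
      then show ?thesis using j'(1) by (intro exI[of _ j'']) auto
    qed
  qed
qed

lemma support: "k < length w0 \<Longrightarrow> idx (w0!k) = 1 \<or> (\<exists>j<k. inl (idx (w0!k) - 1) (w0!j))"
proof (induction k rule: less_induct)
  case (less k)
  show ?case
  proof (rule ccontr)
    assume nk: "\<not> ?case"
    define i where "i = idx (w0!k)"
    have i2: "i \<ge> 2" using nk idx1[OF less.prems] unfolding i_def by simp
    have sup: "\<forall>j<k. idx (w0!j) = 1 \<or> (\<exists>j'<j. inl (idx (w0!j) - 1) (w0!j'))"
      using less.IH less.prems by auto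
    have hij: "hi (w0!j) + 2 \<le> i" if jk: "j < k" for j
    proof (rule ccontr)
      assume "\<not> hi (w0!j) + 2 \<le> i"
      moreover have "\<forall>u. 1 \<le> u \<and> u \<le> hi (w0 ! j) \<longrightarrow> (\<exists>j'\<le>j. inl u (w0 ! j'))"
        using closure[OF sup jk] less.prems by simp
      moreover have "1 \<le> i - 1 \<and> i - 1 \<le> hi (w0!j)" using i2 calculation(1) by arith
      ultimately obtain j' where "j' \<le> j" "inl (i - 1) (w0!j')" by blast
      then show False using nk jk unfolding i_def by force
    qed
    have "\<forall>j. 0 \<le> j \<and> j < k \<longrightarrow> commutes (w0!j) (w0!k)"
      using hij commutes_iff unfolding i_def by blast
    hence "swap_step\<^sup>*\<^sup>* w0 (take 0 w0 @ w0!k # drop 0 (take k w0) @ drop (Suc k) w0)"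
      using move_left[OF less.prems, of 0] by blast
    hence "w0!k # take k w0 @ drop (Suc k) w0 \<in> trace_class w0"
      using in_tc move_set[OF less.prems, of 0] by simp
    then obtain w' where "w0!k = C 1 \<or> w0!k = T 1" using H1 by blast
    then show False using i2 unfolding i_def by auto
  qed
qed

lemma noCC_aux:
  assumes "k < length w0" "j < k" "w0!j = C i" "w0!k = C i"
  shows "\<exists>l v. j < l \<and> l < k \<and> inl v (w0!l) \<and> (v + 1 = i \<or> v = i + 1)"
  using assms
proof (induction k rule: less_induct)
  case (less k)
  show ?case
  proof (cases "\<exists>l. j < l \<and> l < k \<and> w0!l = C i")
    case True
    then obtain l where l: "j < l" "l < k" "w0!l = C i" by blast
    then show ?thesis using less.IH[of l] less.prems by fastforce
  next
    case False
    show ?thesis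
    proof (rule ccontr)
      assume na: "\<not> ?thesis"
      have com: "commutes (w0!l) (w0!k)" if "Suc j \<le> l \<and> l < k" for l
      proof -
        have ne: "w0!l \<noteq> C i" using False that by auto
        have nadj: "\<not> inl v (w0!l)" if "v + 1 = i \<or> v = i + 1" for v
          using na \<open>Suc j \<le> l \<and> l < k\<close> that by auto
        have "hi (w0!l) + 2 \<le> i \<or> i + 2 \<le> idx (w0!l)"
        proof (cases "w0!l")
          case (C a)
          have "\<not> (a + 1 = i \<or> a = i + 1)" using nadj[of a] C by (auto simp: inl_def)
          then show ?thesis using C ne by auto
        next
          case (T a)
          have "\<not> (a + 1 = i \<or> a = i + 1)" using nadj[of a] T by (auto simp: inl_def)
          moreover have "\<not> (a + 2 = i \<or> a = i)" using nadj[of "Suc a"] T by (auto simp: inl_def)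
          ultimately show ?thesis using T by auto
        qed
        then show ?thesis using commutes_iff less.prems(4) by simp
      qed
      hence "swap_step\<^sup>*\<^sup>* w0 (take (Suc j) w0 @ w0!k # drop (Suc j) (take k w0) @ drop (Suc k) w0)"
        using move_left[OF less.prems(1), of "Suc j"] less.prems(2) by auto
      hence mem: "take (Suc j) w0 @ w0!k # drop (Suc j) (take k w0) @ drop (Suc k) w0 \<in> trace_class w0"
        using in_tc move_set[OF less.prems(1)] by blast
      have "take (Suc j) w0 @ w0!k # drop (Suc j) (take k w0) @ drop (Suc k) w0
          = take j w0 @ [C i, C i] @ (drop (Suc j) (take k w0) @ drop (Suc k) w0)"
        using less.prems by (simp add: take_Suc_conv_app_nth)
      moreover have "i \<ge> 1" using idx1[OF less.prems(1)] less.prems(4) by simp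
      ultimately show False using H2 mem by blast
    qed
  qed
qed

end


fun isT :: "letter \<Rightarrow> bool" where "isT (C i) = False" | "isT (T i) = True"

lemma hi_isT: "hi x = idx x + (if isT x then 1 else 0)" by (cases x) auto

definition pos :: "nat \<Rightarrow> nat" where "pos e = e div 4"
definition sl :: "nat \<Rightarrow> nat" where "sl e = e mod 4"

lemma pos_el[simp]: "s < 4 \<Longrightarrow> pos (4 * k + s) = k" unfolding pos_def by simp
lemma sl_el[simp]: "s < 4 \<Longrightarrow> sl (4 * k + s) = s" unfolding sl_def by simp
lemma pos_el0[simp]: "pos (4 * k) = k" unfolding pos_def by simp
lemma sl_el0[simp]: "sl (4 * k) = 0" unfolding sl_def by simp
lemma pos_el123[simp]: "pos (Suc (4 * k)) = k" "pos (Suc (Suc (4 * k))) = k" "pos (Suc (Suc (Suc (4 * k)))) = k"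
  unfolding pos_def by simp_all
lemma sl_el123[simp]: "sl (Suc (4 * k)) = 1" "sl (Suc (Suc (4 * k))) = 2" "sl (Suc (Suc (Suc (4 * k)))) = 3"
  unfolding sl_def by presburger+
lemma el_eq: "e = 4 * pos e + sl e" unfolding pos_def sl_def by simp
lemma sl_lt: "sl e < 4" unfolding sl_def by simp
lemma pos_sl_inj: "pos a = pos b \<Longrightarrow> sl a = sl b \<Longrightarrow> a = b" by (metis el_eq)

definition nsl :: "letter list \<Rightarrow> nat \<Rightarrow> nat" where "nsl w k = (if isT (w ! k) then 4 else 1)"

definition PP :: "letter list \<Rightarrow> nat set" where "PP w = {e. pos e < length w \<and> sl e < nsl w (pos e)}"

definition LL :: "letter list \<Rightarrow> nat \<Rightarrow> nat" where
  "LL w e = idx (w ! pos e) + (if 2 \<le> sl e then 1 else 0)"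

definition LT :: "letter list \<Rightarrow> nat \<Rightarrow> nat \<Rightarrow> bool" where
  "LT w p q \<longleftrightarrow> p \<in> PP w \<and> q \<in> PP w \<and>
     ((pos p \<noteq> pos q \<and> (LL w p + 2 \<le> LL w q \<or> (LL w p + 1 = LL w q \<and> pos p < pos q)))
      \<or> (pos p = pos q \<and> ((sl p = 0 \<and> sl q = 2) \<or> (sl p = 1 \<and> sl q = 3))))"

definition XX :: "letter list \<Rightarrow> nat \<Rightarrow> nat set" where "XX w k = {e \<in> PP w. pos e = k}"

lemma PP_fin: "finite (PP w)"
proof -
  have "PP w \<subseteq> {..< 4 * length w}"
  proof
    fix e assume "e \<in> PP w"
    hence "pos e < length w" unfolding PP_def by simp
    then show "e \<in> {..< 4 * length w}" using el_eq[of e] sl_lt[of e] by simp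
  qed
  then show ?thesis using finite_subset by blast
qed

lemma PP_isT: "e \<in> PP w \<Longrightarrow> 1 \<le> sl e \<Longrightarrow> isT (w ! pos e)"
  unfolding PP_def nsl_def by (auto split: if_splits)

lemma PP_el: "k < length w \<Longrightarrow> s < nsl w k \<Longrightarrow> 4 * k + s \<in> PP w"
  unfolding PP_def nsl_def by (auto split: if_splits)

lemma nsl_le: "nsl w k \<le> 4" unfolding nsl_def by simp

lemma LT_LL: "LT w p q \<Longrightarrow> LL w p < LL w q"
  unfolding LT_def LL_def by auto

lemma same_pos_LL: "pos p = pos q \<Longrightarrow> LL w p \<le> LL w q + 1"
  unfolding LL_def by auto

lemma LT_key: "p \<in> PP w \<Longrightarrow> q \<in> PP w \<Longrightarrow> LL w p + 2 \<le> LL w q \<Longrightarrow> LT w p q"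
  unfolding LT_def using same_pos_LL[of q p w] by auto

lemma LT_adj1: "LT w p q \<Longrightarrow> LL w p + 1 = LL w q \<Longrightarrow> pos p \<le> pos q"
  unfolding LT_def by auto

lemma LT_adj2: "p \<in> PP w \<Longrightarrow> q \<in> PP w \<Longrightarrow> \<not> LT w p q \<Longrightarrow> LL w p + 1 = LL w q \<Longrightarrow> pos q \<le> pos p"
  unfolding LT_def by auto

lemma fp_LT: "finite_poset (PP w) (LT w)"
  unfolding finite_poset_def
proof (intro conjI ballI impI)
  show "finite (PP w)" by (rule PP_fin)
  fix a assume "a \<in> PP w" then show "\<not> LT w a a" using LT_LL by blast
next
  fix a b c assume "a \<in> PP w" "b \<in> PP w" "c \<in> PP w" "LT w a b \<and> LT w b c"
  then show "LT w a c" using LT_LL[of w a b] LT_LL[of w b c] LT_key[of a w c] by auto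
qed

lemma free_LT: "free31 (PP w) (LT w)"
  unfolding free31_def
proof (intro notI, elim bexE conjE)
  fix a b c d assume P: "a \<in> PP w" "b \<in> PP w" "c \<in> PP w" "d \<in> PP w"
    and ab: "LT w a b" and bc: "LT w b c" and da: "incomp (LT w) d a" and db: "incomp (LT w) d b"
    and dc: "incomp (LT w) d c"
  have l1: "LL w a < LL w b" "LL w b < LL w c" using LT_LL ab bc by auto
  have n: "\<not> LT w d a" "\<not> LT w a d" "\<not> LT w d c" "\<not> LT w c d"
    using da dc unfolding incomp_def by auto
  have "\<not> LL w d + 2 \<le> LL w a" "\<not> LL w a + 2 \<le> LL w d" "\<not> LL w d + 2 \<le> LL w c" "\<not> LL w c + 2 \<le> LL w d"
    using LT_key P n by blast+
  hence e: "LL w a + 1 = LL w b" "LL w b + 1 = LL w c" "LL w a + 1 = LL w d" "LL w d + 1 = LL w c"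
    using l1 by auto
  have "pos a \<le> pos b" "pos b \<le> pos c" using LT_adj1 ab bc e by auto
  moreover have "pos d \<le> pos a" using LT_adj2[of a w d] P n e by auto
  moreover have "pos c \<le> pos d" using LT_adj2[of d w c] P n e by auto
  ultimately have "pos a = pos c" by auto
  then show False using same_pos_LL[of c a w] e by simp
qed


sublocale wd \<subseteq> Q: fp31 "PP w0" "LT w0"
  using fp_LT free_LT by unfold_locales auto

context wd begin

lemma LL_ge1: "e \<in> PP w0 \<Longrightarrow> LL w0 e \<ge> 1"
  using idx1[of "pos e"] unfolding PP_def LL_def by auto

lemma LL_pred: assumes e: "e \<in> PP w0" "LL w0 e \<ge> 2" shows "\<exists>q\<in>PP w0. LT w0 q e \<and> Suc (LL w0 q) = LL w0 e"
proof -
  define k where "k = pos e"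
  have k: "k < length w0" using e unfolding PP_def k_def by simp
  have ee: "e = 4 * k + sl e" unfolding k_def by (rule el_eq)
  show ?thesis
  proof (cases "2 \<le> sl e")
    case True
    define q where "q = 4 * k + (sl e - 2)"
    have tT: "isT (w0 ! k)" using PP_isT[OF e(1)] True unfolding k_def by simp
    have s4: "sl e < 4" by (rule sl_lt)
    have pq: "pos q = k" "sl q = sl e - 2" unfolding q_def using s4 by auto
    have qP: "q \<in> PP w0" unfolding q_def using k tT s4 by (intro PP_el) (auto simp: nsl_def)
    have "LT w0 q e" unfolding LT_def using qP e(1) pq True s4 unfolding k_def by auto
    moreover have "Suc (LL w0 q) = LL w0 e" unfolding LL_def using pq True s4 unfolding k_def by simp
    ultimately show ?thesis using qP by blast
  next
    case False
    define i where "i = idx (w0 ! k)"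
    have Le: "LL w0 e = i" unfolding LL_def i_def k_def using False by simp
    have "i \<noteq> 1" using e(2) Le by simp
    then obtain j where j: "j < k" "inl (i - 1) (w0 ! j)" using support[OF k] unfolding i_def by blast
    have jl: "j < length w0" using j k by simp
    show ?thesis
    proof (cases "idx (w0 ! j) = i - 1")
      case True
      have qP: "4 * j \<in> PP w0" using PP_el[OF jl, of 0] by (simp add: nsl_def)
      have "LL w0 (4 * j) = i - 1" unfolding LL_def using True by simp
      moreover have "LT w0 (4 * j) e" unfolding LT_def using qP e(1) calculation Le j e(2)
        unfolding k_def by auto
      ultimately show ?thesis using qP e(2) Le by (intro bexI[of _ "4 * j"]) auto
    next
      case False
      hence h: "isT (w0 ! j)" "idx (w0 ! j) + 1 = i - 1" using j(2) hi_isT[of "w0 ! j"]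
        unfolding inl_def by (auto split: if_splits)
      have qP: "4 * j + 2 \<in> PP w0" using PP_el[OF jl, of 2] h by (simp add: nsl_def)
      have "LL w0 (4 * j + 2) = i - 1" unfolding LL_def using h by simp
      moreover have "LT w0 (4 * j + 2) e" unfolding LT_def using qP e(1) calculation Le j e(2)
        unfolding k_def by auto
      ultimately show ?thesis using qP e(2) Le by (intro bexI[of _ "4 * j + 2"]) auto
    qed
  qed
qed

lemma lev: "e \<in> PP w0 \<Longrightarrow> level (PP w0) (LT w0) e = LL w0 e"
proof (rule Q.level_char)
  show "\<And>x. x \<in> PP w0 \<Longrightarrow> 1 \<le> LL w0 x" by (rule LL_ge1)
qed (auto intro: LT_LL LL_pred)

end

context wd begin

abbreviation "P0 \<equiv> PP w0"
abbreviation "lt0 \<equiv> LT w0"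

lemma dsub: assumes "p \<in> P0" "q \<in> P0" "LL w0 p = LL w0 q" "pos p < pos q"
  shows "down_set P0 lt0 p \<subseteq> down_set P0 lt0 q"
proof
  fix x assume "x \<in> down_set P0 lt0 p"
  hence x: "x \<in> P0" "lt0 x p" by (auto simp: down_set_def)
  have "LL w0 x < LL w0 p" using LT_LL x(2) .
  show "x \<in> down_set P0 lt0 q"
  proof (cases "LL w0 x + 2 \<le> LL w0 q")
    case True then show ?thesis using LT_key x(1) assms(2) by (auto simp: down_set_def)
  next
    case False
    hence "LL w0 x + 1 = LL w0 p" using \<open>LL w0 x < LL w0 p\<close> assms(3) by simp
    hence "pos x \<le> pos p" using LT_adj1 x(2) by blast
    hence "lt0 x q" unfolding LT_def using x(1) assms \<open>LL w0 x + 1 = LL w0 p\<close> by auto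
    then show ?thesis using x(1) by (auto simp: down_set_def)
  qed
qed

lemma usub: assumes "p \<in> P0" "q \<in> P0" "LL w0 p = LL w0 q" "pos p < pos q"
  shows "up_set P0 lt0 q \<subseteq> up_set P0 lt0 p"
proof
  fix x assume "x \<in> up_set P0 lt0 q"
  hence x: "x \<in> P0" "lt0 q x" by (auto simp: up_set_def)
  have "LL w0 q < LL w0 x" using LT_LL x(2) .
  show "x \<in> up_set P0 lt0 p"
  proof (cases "LL w0 p + 2 \<le> LL w0 x")
    case True then show ?thesis using LT_key x(1) assms(1) by (auto simp: up_set_def)
  next
    case False
    hence e: "LL w0 q + 1 = LL w0 x" using \<open>LL w0 q < LL w0 x\<close> assms(3) by simp
    hence "pos q \<le> pos x" using LT_adj1 x(2) by blast
    hence "lt0 p x" unfolding LT_def using x(1) assms e by auto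
    then show ?thesis using x(1) by (auto simp: up_set_def)
  qed
qed

lemma LL_same_pos: "pos p = pos q \<Longrightarrow> LL w0 p = LL w0 q \<longleftrightarrow> (2 \<le> sl p \<longleftrightarrow> 2 \<le> sl q)"
  unfolding LL_def by auto

lemma deq: assumes "p \<in> P0" "q \<in> P0" "pos p = pos q" "sl p < 2" "sl q < 2"
  shows "down_set P0 lt0 p = down_set P0 lt0 q"
proof -
  have "LL w0 p = LL w0 q" using LL_same_pos assms by auto
  then show ?thesis using assms unfolding down_set_def LT_def by auto
qed

lemma ueq: assumes "p \<in> P0" "q \<in> P0" "pos p = pos q" "2 \<le> sl p" "2 \<le> sl q"
  shows "up_set P0 lt0 p = up_set P0 lt0 q"
proof -
  have "LL w0 p = LL w0 q" using LL_same_pos assms by auto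
  then show ?thesis using assms unfolding up_set_def LT_def by auto
qed

lemma top_pos: assumes "p \<in> P0" "q \<in> P0" "top_rel P0 lt0 p q"
  shows "pos p = pos q \<and> 2 \<le> sl p \<and> 2 \<le> sl q"
proof -
  have l: "LL w0 p = LL w0 q" using Q.top_level[OF assms] lev assms by simp
  have "\<not> pos p < pos q" using dsub[OF assms(1,2) l] assms(3) by (auto simp: top_rel_def)
  moreover have "\<not> pos q < pos p" using dsub[OF assms(2,1) l[symmetric]] assms(3) by (auto simp: top_rel_def)
  ultimately have pp: "pos p = pos q" by simp
  have "2 \<le> sl p"
  proof (rule ccontr)
    assume "\<not> 2 \<le> sl p"
    hence "sl q < 2" using LL_same_pos[OF pp] l by auto
    then show False using deq[OF assms(1,2) pp] \<open>\<not> 2 \<le> sl p\<close> assms(3) by (auto simp: top_rel_def)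
  qed
  then show ?thesis using pp LL_same_pos[OF pp] l by auto
qed

lemma bot_pos: assumes "p \<in> P0" "q \<in> P0" "bot_rel P0 lt0 p q"
  shows "pos p = pos q \<and> sl p < 2 \<and> sl q < 2"
proof -
  have l: "LL w0 p = LL w0 q" using Q.bot_level[OF assms] lev assms by simp
  have "\<not> pos p < pos q" using usub[OF assms(1,2) l] assms(3) by (auto simp: bot_rel_def)
  moreover have "\<not> pos q < pos p" using usub[OF assms(2,1) l[symmetric]] assms(3) by (auto simp: bot_rel_def)
  ultimately have pp: "pos p = pos q" by simp
  have "sl p < 2"
  proof (rule ccontr)
    assume "\<not> sl p < 2"
    hence "2 \<le> sl q" using LL_same_pos[OF pp] l by auto
    then show False using ueq[OF assms(1,2) pp] \<open>\<not> sl p < 2\<close> assms(3) by (auto simp: bot_rel_def)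
  qed
  then show ?thesis using pp LL_same_pos[OF pp] l by auto
qed

lemma comp_top_sub: assumes "e \<in> P0"
  shows "component P0 (top_rel P0 lt0) e \<subseteq> {x\<in>P0. pos x = pos e \<and> (2 \<le> sl x \<longleftrightarrow> 2 \<le> sl e) \<and> (sl e < 2 \<longrightarrow> x = e)}"
proof
  fix b assume "b \<in> component P0 (top_rel P0 lt0) e"
  hence "(\<lambda>x y. x \<in> P0 \<and> y \<in> P0 \<and> top_rel P0 lt0 x y)\<^sup>*\<^sup>* e b" by (auto simp: component_def)
  then show "b \<in> {x\<in>P0. pos x = pos e \<and> (2 \<le> sl x \<longleftrightarrow> 2 \<le> sl e) \<and> (sl e < 2 \<longrightarrow> x = e)}"
  proof (induction rule: rtranclp_induct)
    case base then show ?case using assms by simp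
  next
    case (step y z)
    then show ?case using top_pos[of y z] by auto
  qed
qed

lemma comp_bot_sub: assumes "e \<in> P0"
  shows "component P0 (bot_rel P0 lt0) e \<subseteq> {x\<in>P0. pos x = pos e \<and> (sl x < 2 \<longleftrightarrow> sl e < 2) \<and> (2 \<le> sl e \<longrightarrow> x = e)}"
proof
  fix b assume "b \<in> component P0 (bot_rel P0 lt0) e"
  hence "(\<lambda>x y. x \<in> P0 \<and> y \<in> P0 \<and> bot_rel P0 lt0 x y)\<^sup>*\<^sup>* e b" by (auto simp: component_def)
  then show "b \<in> {x\<in>P0. pos x = pos e \<and> (sl x < 2 \<longleftrightarrow> sl e < 2) \<and> (2 \<le> sl e \<longrightarrow> x = e)}"
  proof (induction rule: rtranclp_induct)
    case base then show ?case using assms by simp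
  next
    case (step y z)
    then show ?case using bot_pos[of y z] by auto
  qed
qed

lemma PP_top_set: "{x\<in>P0. pos x = k \<and> 2 \<le> sl x} \<subseteq> {4*k+2, 4*k+3}"
proof
  fix x assume x: "x \<in> {x\<in>P0. pos x = k \<and> 2 \<le> sl x}"
  have "sl x = 2 \<or> sl x = 3" using x sl_lt[of x] by auto
  then show "x \<in> {4*k+2, 4*k+3}" using el_eq[of x] x by auto
qed

lemma PP_bot_set: "{x\<in>P0. pos x = k \<and> sl x < 2} \<subseteq> {4*k, 4*k+1}"
proof
  fix x assume x: "x \<in> {x\<in>P0. pos x = k \<and> sl x < 2}"
  have "sl x = 0 \<or> sl x = 1" using x by auto
  then show "x \<in> {4*k, 4*k+1}" using el_eq[of x] x by auto
qed

lemma TP: assumes "k < length w0" "isT (w0 ! k)"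
  shows "4*k \<in> P0" "4*k+1 \<in> P0" "4*k+2 \<in> P0" "4*k+3 \<in> P0"
  using PP_el[OF assms(1), of 0] PP_el[OF assms(1), of 1] PP_el[OF assms(1), of 2] PP_el[OF assms(1), of 3]
    assms(2) by (simp_all add: nsl_def)

lemma LTs: assumes "k < length w0" "isT (w0 ! k)"
  shows "lt0 (4*k) (4*k+2)" "lt0 (4*k+1) (4*k+3)" "\<not> lt0 (4*k) (4*k+3)" "\<not> lt0 (4*k+1) (4*k+2)"
    "\<not> lt0 (4*k+2) (4*k+3)" "\<not> lt0 (4*k+3) (4*k+2)" "\<not> lt0 (4*k) (4*k+1)" "\<not> lt0 (4*k+1) (4*k)"
    "\<not> lt0 (4*k+2) (4*k)" "\<not> lt0 (4*k+3) (4*k+1)" "\<not> lt0 (4*k+2) (4*k+1)" "\<not> lt0 (4*k+3) (4*k)"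
  using TP[OF assms] unfolding LT_def by simp_all

lemma top_pair: assumes "k < length w0" "isT (w0 ! k)" shows "top_rel P0 lt0 (4*k+2) (4*k+3)"
  using TP[OF assms] LTs[OF assms] unfolding top_rel_def down_set_def by blast

lemma bot_pair: assumes "k < length w0" "isT (w0 ! k)" shows "bot_rel P0 lt0 (4*k) (4*k+1)"
  using TP[OF assms] LTs[OF assms] unfolding bot_rel_def up_set_def by blast

end

context wd begin

lemma card2: "card {4*k+2, 4*k+(3::nat)} = 2" "card {4*k, 4*k+(1::nat)} = 2" by simp_all

lemma is_top_char: assumes "is_top P0 lt0 A" shows "\<exists>k<length w0. isT (w0 ! k) \<and> A = {4*k+2, 4*k+3}"
proof -
  obtain a where a: "a \<in> P0" "A = component P0 (top_rel P0 lt0) a" and c: "card A \<ge> 2"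
    using assms by (auto simp: is_top_def)
  have sub: "A \<subseteq> {x\<in>P0. pos x = pos a \<and> (2 \<le> sl x \<longleftrightarrow> 2 \<le> sl a) \<and> (sl a < 2 \<longrightarrow> x = a)}"
    using comp_top_sub[OF a(1)] a(2) by simp
  have sa: "2 \<le> sl a"
  proof (rule ccontr)
    assume "\<not> 2 \<le> sl a"
    hence "A \<subseteq> {a}" using sub by auto
    hence "card A \<le> 1" using card_mono[of "{a}" A] by simp
    then show False using c by simp
  qed
  hence "A \<subseteq> {x\<in>P0. pos x = pos a \<and> 2 \<le> sl x}" using sub by auto
  hence A2: "A \<subseteq> {4*pos a+2, 4*pos a+3}" using PP_top_set[of "pos a"] by blast
  have "card A \<le> 2" using card_mono[OF _ A2] card2 by simp
  hence "A = {4*pos a+2, 4*pos a+3}" using card_subset_eq[OF _ A2] card2 c by simp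
  moreover have "isT (w0 ! pos a)" using PP_isT[OF a(1)] sa by simp
  moreover have "pos a < length w0" using a(1) by (simp add: PP_def)
  ultimately show ?thesis by blast
qed

lemma is_bot_char: assumes "is_bottom P0 lt0 B" shows "\<exists>k<length w0. isT (w0 ! k) \<and> B = {4*k, 4*k+1}"
proof -
  obtain a where a: "a \<in> P0" "B = component P0 (bot_rel P0 lt0) a" and c: "card B \<ge> 2"
    using assms by (auto simp: is_bottom_def)
  have sub: "B \<subseteq> {x\<in>P0. pos x = pos a \<and> (sl x < 2 \<longleftrightarrow> sl a < 2) \<and> (2 \<le> sl a \<longrightarrow> x = a)}"
    using comp_bot_sub[OF a(1)] a(2) by simp
  have sa: "sl a < 2"
  proof (rule ccontr)
    assume "\<not> sl a < 2"
    hence "B \<subseteq> {a}" using sub by auto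
    hence "card B \<le> 1" using card_mono[of "{a}" B] by simp
    then show False using c by simp
  qed
  hence "B \<subseteq> {x\<in>P0. pos x = pos a \<and> sl x < 2}" using sub by auto
  hence B2: "B \<subseteq> {4*pos a, 4*pos a+1}" using PP_bot_set[of "pos a"] by blast
  have "card B \<le> 2" using card_mono[OF _ B2] card2 by simp
  hence B: "B = {4*pos a, 4*pos a+1}" using card_subset_eq[OF _ B2] card2 c by simp
  have "4*pos a + 1 \<in> B" using B by simp
  hence "4*pos a + 1 \<in> P0" using sub by blast
  hence "isT (w0 ! pos a)" using PP_isT[of "4*pos a+1" w0] by simp
  moreover have "pos a < length w0" using a(1) by (simp add: PP_def)
  ultimately show ?thesis using B by blast
qed

lemma is_top_T: assumes "k < length w0" "isT (w0 ! k)" shows "is_top P0 lt0 {4*k+2, 4*k+3}"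
proof -
  have e: "4*k+2 \<in> P0" "4*k+3 \<in> P0" using TP[OF assms] by auto
  have "component P0 (top_rel P0 lt0) (4*k+2) \<subseteq> {4*k+2, 4*k+3}"
    using comp_top_sub[OF e(1)] PP_top_set[of k] by auto
  moreover have "4*k+2 \<in> component P0 (top_rel P0 lt0) (4*k+2)" using e by (simp add: component_def)
  moreover have "4*k+3 \<in> component P0 (top_rel P0 lt0) (4*k+2)"
    using e top_pair[OF assms] unfolding component_def by (auto intro: r_into_rtranclp)
  ultimately have c: "component P0 (top_rel P0 lt0) (4*k+2) = {4*k+2, 4*k+3}" by blast
  show ?thesis unfolding is_top_def using card2(1) e(1) c by (intro conjI bexI[of _ "4*k+2"]) simp_all
qed

lemma is_bot_T: assumes "k < length w0" "isT (w0 ! k)" shows "is_bottom P0 lt0 {4*k, 4*k+1}"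
proof -
  have e: "4*k \<in> P0" "4*k+1 \<in> P0" using TP[OF assms] by auto
  have "component P0 (bot_rel P0 lt0) (4*k) \<subseteq> {4*k, 4*k+1}"
    using comp_bot_sub[OF e(1)] PP_bot_set[of k] by auto
  moreover have "4*k \<in> component P0 (bot_rel P0 lt0) (4*k)" using e by (simp add: component_def)
  moreover have "4*k+1 \<in> component P0 (bot_rel P0 lt0) (4*k)"
    using e bot_pair[OF assms] unfolding component_def by (auto intro: r_into_rtranclp)
  ultimately have c: "component P0 (bot_rel P0 lt0) (4*k) = {4*k, 4*k+1}" by blast
  show ?thesis unfolding is_bottom_def using card2(2) e(1) c by (intro conjI bexI[of _ "4*k"]) simp_all
qed

lemma XX_T: assumes "k < length w0" "isT (w0 ! k)" shows "XX w0 k = {4*k, 4*k+1, 4*k+2, 4*k+3}"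
proof
  show "XX w0 k \<subseteq> {4*k, 4*k+1, 4*k+2, 4*k+3}"
  proof
    fix x assume "x \<in> XX w0 k"
    hence "x \<in> {x\<in>P0. pos x = k \<and> 2 \<le> sl x} \<or> x \<in> {x\<in>P0. pos x = k \<and> sl x < 2}"
      unfolding XX_def by auto
    then show "x \<in> {4*k, 4*k+1, 4*k+2, 4*k+3}" using PP_top_set[of k] PP_bot_set[of k] by blast
  qed
  show "{4*k, 4*k+1, 4*k+2, 4*k+3} \<subseteq> XX w0 k" using TP[OF assms] unfolding XX_def by simp
qed

lemma XX_C: assumes "k < length w0" "\<not> isT (w0 ! k)" shows "XX w0 k = {4*k}"
proof
  show "XX w0 k \<subseteq> {4*k}"
  proof
    fix x assume "x \<in> XX w0 k"
    hence "pos x = k" "sl x = 0" using assms unfolding XX_def PP_def nsl_def by auto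
    then show "x \<in> {4*k}" using el_eq[of x] by simp
  qed
  show "{4*k} \<subseteq> XX w0 k" using PP_el[OF assms(1), of 0] unfolding XX_def by (simp add: nsl_def)
qed

lemma matched_eq: assumes "j < length w0" "isT (w0 ! j)" "k < length w0" "isT (w0 ! k)"
  and m: "matched lt0 {4*j+2, 4*j+3} {4*k, 4*k+1}" shows "j = k"
proof (rule ccontr)
  assume jk: "j \<noteq> k"
  obtain a1 a2 b1 where w: "a1 \<in> {4*j+2, 4*j+3}" "a2 \<in> {4*j+2, 4*j+3}" "b1 \<in> {4*k, 4*k+1}"
    "lt0 b1 a1" "\<not> lt0 b1 a2"
    using m unfolding matched_def incomp_def by blast
  have P: "a1 \<in> P0" "a2 \<in> P0" "b1 \<in> P0" using w TP assms by auto
  have "pos a1 = j" "pos a2 = j" "pos b1 = k" "LL w0 a1 = LL w0 a2" using w unfolding LL_def by auto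
  then show False using w(4,5) P jk unfolding LT_def by auto
qed

lemma matched_T: assumes "k < length w0" "isT (w0 ! k)" shows "matched lt0 {4*k+2, 4*k+3} {4*k, 4*k+1}"
  unfolding matched_def incomp_def using LTs[OF assms]
  by (intro bexI[of _ "4*k+2"] bexI[of _ "4*k+3"] bexI[of _ "4*k"] bexI[of _ "4*k+1"]) auto

lemma tangles_char: "tangles P0 lt0 = {XX w0 k | k. k < length w0 \<and> isT (w0 ! k)}"
proof (intro equalityI subsetI)
  fix X assume "X \<in> tangles P0 lt0"
  then obtain A B where X: "X = A \<union> B" "is_top P0 lt0 A" "is_bottom P0 lt0 B" "matched lt0 A B"
    unfolding tangles_def by blast
  obtain j where j: "j < length w0" "isT (w0 ! j)" "A = {4*j+2, 4*j+3}" using is_top_char X by blast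
  obtain k where k: "k < length w0" "isT (w0 ! k)" "B = {4*k, 4*k+1}" using is_bot_char X by blast
  have "j = k" using matched_eq[OF j(1,2) k(1,2)] X j k by simp
  then have "X = XX w0 k" using XX_T[OF k(1,2)] X j k by auto
  then show "X \<in> {XX w0 k | k. k < length w0 \<and> isT (w0 ! k)}" using k by blast
next
  fix X assume "X \<in> {XX w0 k | k. k < length w0 \<and> isT (w0 ! k)}"
  then obtain k where k: "k < length w0" "isT (w0 ! k)" "X = XX w0 k" by blast
  have "X = {4*k+2, 4*k+3} \<union> {4*k, 4*k+1}" using XX_T[OF k(1,2)] k(3) by auto
  then show "X \<in> tangles P0 lt0" unfolding tangles_def
    using is_top_T[OF k(1,2)] is_bot_T[OF k(1,2)] matched_T[OF k(1,2)] by blast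
qed

lemma in_tangle_iff: assumes "x \<in> P0" shows "in_tangle P0 lt0 x \<longleftrightarrow> isT (w0 ! pos x)"
proof
  assume "in_tangle P0 lt0 x"
  then obtain k where "k < length w0" "isT (w0 ! k)" "x \<in> XX w0 k"
    unfolding in_tangle_def tangles_char by blast
  then show "isT (w0 ! pos x)" unfolding XX_def by simp
next
  assume "isT (w0 ! pos x)"
  moreover have "pos x < length w0" using assms by (simp add: PP_def)
  moreover have "x \<in> XX w0 (pos x)" using assms by (simp add: XX_def)
  ultimately show "in_tangle P0 lt0 x" unfolding in_tangle_def tangles_char by blast
qed

lemma lvl_elem: assumes "l < length w0" "inl v (w0 ! l)" shows "\<exists>e\<in>P0. pos e = l \<and> LL w0 e = v"
proof (cases "v = idx (w0 ! l)")
  case True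
  have "4*l \<in> P0" using PP_el[OF assms(1), of 0] by (simp add: nsl_def)
  then show ?thesis using True by (intro bexI[of _ "4*l"]) (auto simp: LL_def)
next
  case False
  hence h: "isT (w0 ! l)" "v = idx (w0 ! l) + 1" using assms(2) hi_isT[of "w0 ! l"]
    unfolding inl_def by (auto split: if_splits)
  have "4*l+2 \<in> P0" using PP_el[OF assms(1), of 2] h by (simp add: nsl_def)
  then show ?thesis using h by (intro bexI[of _ "4*l+2"]) (auto simp: LL_def)
qed

lemma no_clone_lt: assumes x: "x \<in> P0" "\<not> isT (w0 ! pos x)" and y: "y \<in> P0" "\<not> isT (w0 ! pos y)"
  and p: "pos x < pos y" and cr: "clone_rel P0 lt0 x y" shows False
proof -
  have sx: "sl x = 0" and sy: "sl y = 0" using x y unfolding PP_def nsl_def by auto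
  have "level P0 lt0 x = level P0 lt0 y" using Q.level_down[OF x(1) y(1)] cr by (simp add: clone_rel_def)
  hence LLe: "LL w0 x = LL w0 y" using lev x y by simp
  have ly: "pos y < length w0" using y by (simp add: PP_def)
  obtain i where i: "w0 ! pos x = C i" using x(2) by (cases "w0 ! pos x") auto
  have "w0 ! pos y = C i" using y(2) LLe i sx sy unfolding LL_def by (cases "w0 ! pos y") auto
  then obtain l v where l: "pos x < l" "l < pos y" "inl v (w0 ! l)" "v + 1 = i \<or> v = i + 1"
    using noCC_aux[OF ly p i] by blast
  obtain e where e: "e \<in> P0" "pos e = l" "LL w0 e = v" using lvl_elem[of l v] l ly by auto
  have Lx: "LL w0 x = i" "LL w0 y = i" using i LLe sx unfolding LL_def by auto
  show False
  proof (cases "v + 1 = i")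
    case True
    have "lt0 e y" unfolding LT_def using e y(1) l True Lx by auto
    moreover have "\<not> lt0 e x" unfolding LT_def using e l True Lx by auto
    ultimately show False using cr e(1) unfolding clone_rel_def down_set_def by blast
  next
    case False
    hence v: "v = i + 1" using l by simp
    have "lt0 x e" unfolding LT_def using e x(1) l v Lx by auto
    moreover have "\<not> lt0 y e" unfolding LT_def using e l v Lx by auto
    ultimately show False using cr e(1) unfolding clone_rel_def up_set_def by blast
  qed
qed

lemma clone_class: assumes x: "x \<in> P0" "\<not> isT (w0 ! pos x)"
  shows "{y\<in>P0. \<not> in_tangle P0 lt0 y \<and> clone_rel P0 lt0 x y} = {x}"
proof (intro equalityI subsetI)
  fix y assume "y \<in> {y\<in>P0. \<not> in_tangle P0 lt0 y \<and> clone_rel P0 lt0 x y}"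
  hence y: "y \<in> P0" "\<not> isT (w0 ! pos y)" "clone_rel P0 lt0 x y" using in_tangle_iff by auto
  have cr': "clone_rel P0 lt0 y x" using y(3) by (simp add: clone_rel_def)
  have "pos x = pos y" using no_clone_lt[OF x y(1,2) _ y(3)] no_clone_lt[OF y(1,2) x _ cr']
    by (meson linorder_neqE_nat)
  moreover have "sl x = 0" "sl y = 0" using x y unfolding PP_def nsl_def by auto
  ultimately show "y \<in> {x}" using pos_sl_inj by simp
next
  fix y assume "y \<in> {x}"
  then show "y \<in> {y\<in>P0. \<not> in_tangle P0 lt0 y \<and> clone_rel P0 lt0 x y}"
    using x in_tangle_iff by (simp add: clone_rel_def)
qed

lemma clones_char: "clone_sets P0 lt0 = {XX w0 k | k. k < length w0 \<and> \<not> isT (w0 ! k)}"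
proof (intro equalityI subsetI)
  fix X assume "X \<in> clone_sets P0 lt0"
  then obtain x where x: "x \<in> P0" "\<not> in_tangle P0 lt0 x" "X = {y\<in>P0. \<not> in_tangle P0 lt0 y \<and> clone_rel P0 lt0 x y}"
    unfolding clone_sets_def by blast
  have nt: "\<not> isT (w0 ! pos x)" using x in_tangle_iff by simp
  have px: "pos x < length w0" using x by (simp add: PP_def)
  have "sl x = 0" using x nt unfolding PP_def nsl_def by auto
  hence "x = 4 * pos x" using el_eq[of x] by simp
  hence "X = XX w0 (pos x)" using clone_class[OF x(1) nt] x(3) XX_C[OF px nt] by simp
  then show "X \<in> {XX w0 k | k. k < length w0 \<and> \<not> isT (w0 ! k)}" using px nt by blast
next
  fix X assume "X \<in> {XX w0 k | k. k < length w0 \<and> \<not> isT (w0 ! k)}"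
  then obtain k where k: "k < length w0" "\<not> isT (w0 ! k)" "X = XX w0 k" by blast
  have e: "4*k \<in> P0" using PP_el[OF k(1), of 0] by (simp add: nsl_def)
  have "\<not> in_tangle P0 lt0 (4*k)" using in_tangle_iff[OF e] k by simp
  moreover have "X = {y\<in>P0. \<not> in_tangle P0 lt0 y \<and> clone_rel P0 lt0 (4*k) y}"
    using clone_class[of "4*k"] e k XX_C[OF k(1,2)] by simp
  ultimately show "X \<in> clone_sets P0 lt0" unfolding clone_sets_def using e by blast
qed

end

context wd begin

definition Xs0 where "Xs0 = map (XX w0) [0..<length w0]"

lemma e0P: "k < length w0 \<Longrightarrow> 4*k \<in> P0" using PP_el[of k w0 0] by (simp add: nsl_def)

lemma XX_in: "k < length w0 \<Longrightarrow> 4*k \<in> XX w0 k" using e0P by (simp add: XX_def)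

lemma parts_eq: "parts P0 lt0 = set Xs0"
proof -
  have "set Xs0 = XX w0 ` {0..<length w0}" unfolding Xs0_def by simp
  also have "\<dots> = {XX w0 k | k. k < length w0 \<and> isT (w0 ! k)} \<union> {XX w0 k | k. k < length w0 \<and> \<not> isT (w0 ! k)}"
  proof (intro equalityI subsetI)
    fix X assume "X \<in> XX w0 ` {0..<length w0}"
    then obtain k where k: "k < length w0" "X = XX w0 k" by auto
    show "X \<in> {XX w0 k | k. k < length w0 \<and> isT (w0 ! k)} \<union> {XX w0 k | k. k < length w0 \<and> \<not> isT (w0 ! k)}"
    proof (cases "isT (w0 ! k)")
      case True then show ?thesis using k by blast
    next
      case False then show ?thesis using k by blast
    qed
  next
    fix X assume "X \<in> {XX w0 k | k. k < length w0 \<and> isT (w0 ! k)} \<union> {XX w0 k | k. k < length w0 \<and> \<not> isT (w0 ! k)}"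
    then obtain k where k: "k < length w0" "X = XX w0 k" by blast
    then show "X \<in> XX w0 ` {0..<length w0}" by simp
  qed
  finally show ?thesis unfolding parts_def tangles_char clones_char by simp
qed

lemma XX_pos: "e \<in> XX w0 k \<Longrightarrow> pos e = k \<and> e \<in> P0" by (simp add: XX_def)

lemma Min_XX: assumes "k < length w0" shows "Min (level P0 lt0 ` XX w0 k) = idx (w0 ! k)"
proof (rule Min_eqI)
  show "finite (level P0 lt0 ` XX w0 k)" using PP_fin[of w0] unfolding XX_def by simp
  show "idx (w0 ! k) \<in> level P0 lt0 ` XX w0 k"
    using XX_in[OF assms] lev[OF e0P[OF assms]] by (force simp: LL_def)
  fix y assume "y \<in> level P0 lt0 ` XX w0 k"
  then obtain e where "e \<in> XX w0 k" "y = level P0 lt0 e" by blast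
  then show "idx (w0 ! k) \<le> y" using XX_pos lev by (auto simp: LL_def)
qed

lemma pl_XX: assumes "k < length w0" shows "part_letter P0 lt0 (XX w0 k) = w0 ! k"
proof (cases "isT (w0 ! k)")
  case True
  hence "XX w0 k \<in> tangles P0 lt0" using assms tangles_char by blast
  then show ?thesis using True Min_XX[OF assms] unfolding part_letter_def by (cases "w0 ! k") auto
next
  case False
  have "XX w0 k \<notin> tangles P0 lt0"
  proof
    assume "XX w0 k \<in> tangles P0 lt0"
    then obtain j where "j < length w0" "isT (w0 ! j)" "XX w0 k = XX w0 j" using tangles_char by blast
    hence "4*k \<in> XX w0 j" using XX_in[OF assms] by simp
    hence "k = j" using XX_pos[of "4*k" j] by simp
    then show False using False \<open>isT (w0 ! j)\<close> by simp
  qed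
  then show ?thesis using False Min_XX[OF assms] unfolding part_letter_def by (cases "w0 ! k") auto
qed

lemma compat: "compatible_listing P0 lt0 Xs0"
  unfolding compatible_listing_def
proof (intro conjI allI impI ballI)
  show "distinct Xs0" unfolding Xs0_def distinct_map
  proof
    show "inj_on (XX w0) (set [0..<length w0])"
    proof (rule inj_onI)
      fix i j assume i: "i \<in> set [0..<length w0]" and "j \<in> set [0..<length w0]" and e: "XX w0 i = XX w0 j"
      have "4*i \<in> XX w0 j" using XX_in[of i] i e by simp
      then show "i = j" using XX_pos[of "4*i" j] by simp
    qed
  qed simp
  show "set Xs0 = parts P0 lt0" using parts_eq by simp
  fix i j a b assume ij: "i < length Xs0" "j < length Xs0" "i \<noteq> j" and a: "a \<in> Xs0 ! i" and b: "b \<in> Xs0 ! j"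
  have a': "pos a = i" "a \<in> P0" and b': "pos b = j" "b \<in> P0" using a b ij XX_pos unfolding Xs0_def by auto
  show "lt0 a b \<longleftrightarrow> (level P0 lt0 a + 2 \<le> level P0 lt0 b \<or> (level P0 lt0 a + 1 = level P0 lt0 b \<and> i < j))"
    using a' b' ij(3) by (simp add: LT_def lev)
qed

lemma word_eq: "listing_word P0 lt0 Xs0 = w0"
  unfolding listing_word_def Xs0_def by (rule nth_equalityI) (auto simp: pl_XX)

lemma nonempty: "P0 \<noteq> {}"
proof -
  have "w0 \<in> trace_class w0" using v0 by (simp add: trace_class_def)
  then obtain w' where "w0 = C 1 # w' \<or> w0 = T 1 # w'" using H1 by blast
  hence "0 < length w0" by auto
  then show ?thesis using e0P[of 0] by auto
qed

lemma backward: "\<exists>P lt. finite_poset P lt \<and> P \<noteq> {} \<and> free31 P lt \<and> is_skeleton P lt (trace_class w0)"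
proof (intro exI conjI)
  show "finite_poset P0 lt0" by (rule fp_LT)
  show "P0 \<noteq> {}" by (rule nonempty)
  show "free31 P0 lt0" by (rule free_LT)
  show "is_skeleton P0 lt0 (trace_class w0)" unfolding is_skeleton_def
    using compat word_eq by (intro exI[of _ Xs0]) simp
qed

end

theorem theorem3p11:
  assumes "m \<in> monoid_M"
  shows "(\<exists>P lt. finite_poset P lt \<and> P \<noteq> {} \<and> free31 P lt \<and> is_skeleton P lt m) \<longleftrightarrow>
         ((\<forall>w\<in>m. \<exists>w'. w = C 1 # w' \<or> w = T 1 # w') \<and>
          (\<forall>w\<in>m. \<not> (\<exists>u v i. i \<ge> 1 \<and> w = u @ [C i, C i] @ v)))"
proof
  assume "\<exists>P lt. finite_poset P lt \<and> P \<noteq> {} \<and> free31 P lt \<and> is_skeleton P lt m"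
  then show "(\<forall>w\<in>m. \<exists>w'. w = C 1 # w' \<or> w = T 1 # w') \<and>
          (\<forall>w\<in>m. \<not> (\<exists>u v i. i \<ge> 1 \<and> w = u @ [C i, C i] @ v))" using forward by blast
next
  assume h: "(\<forall>w\<in>m. \<exists>w'. w = C 1 # w' \<or> w = T 1 # w') \<and>
          (\<forall>w\<in>m. \<not> (\<exists>u v i. i \<ge> 1 \<and> w = u @ [C i, C i] @ v))"
  obtain w0 where w0: "valid_word w0" "m = trace_class w0" using assms unfolding monoid_M_def by blast
  interpret wd w0 using w0 h by unfold_locales auto
  show "\<exists>P lt. finite_poset P lt \<and> P \<noteq> {} \<and> free31 P lt \<and> is_skeleton P lt m"
    using backward w0(2) by simp
qed


end
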